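(* Let $L$ be an $r\times s$ $\boldsymbol\rho$-latin rectangle with $r,s\le n$ and $n>\min\{r,s\}$, such that $e_\ell\ge\rho_\ell-n+\max\{r,s\}$ for all $\ell\in[k]$. Then $L$ can be completed to an $n\times n$ $\boldsymbol\rho$-latin square if and only if one (equivalently, every one) of the following conditions holds: (1) for all $I\subseteq[r]$ and $J\subseteq[s]$: $$|I|(n-s)+|J|(n-r)\le\sum_{\ell\in[k]}\min\{\rho_\ell-e_\ell,\ \mu_I(\ell)+\mu_J(\ell)\};$$ (2) for all $I\subseteq[r]$, $J\subseteq[s]$ and $K\subseteq[k]$: $$\sum_{\ell\in K}(\rho_\ell-e_\ell)\ge\sum_{i\in I}\big((n-s)\dot-\mu_{\bar K}(i)\big)+\sum_{j\in J}\big((n-r)\dot-\mu_{\bar K}(j)\big).$$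
   Context: Let $n,k$ be positive integers. Let $\boldsymbol\rho=(\rho_1,\dots,\rho_k)$ be integers with $1\le\rho_\ell\le n\le k$ and $\sum_\ell\rho_\ell=n^2$. A $\boldsymbol\rho$-latin square of order $n$ is an $n\times n$ array with entries in $[k]$, each symbol at most once per row and per column, and symbol $\ell$ occurring exactly $\rho_\ell$ times. An $r\times s$ $\boldsymbol\rho$-latin rectangle is an $r\times s$ array with entries in $[k]$, each symbol at most once per row and per column, and symbol $\ell$ occurring at most $\rho_\ell$ times. Completing it means finding a $\boldsymbol\rho$-latin square of order $n$ whose top-left $r\times s$ subarray is $L$. $e_\ell$ is the number of occurrences of $\ell$ in $L$. For $i\in[r]$, $j\in[s]$, $\ell\in[k]$, $I\subseteq[r]$, $J\subseteq[s]$, $K\subseteq[k]$: - $\mu_K(i)$ (resp. $\mu_K(j)$) is the number of symbols of $K$ not occurring in row $i$ (resp. column $j$) of $L$; - $\mu_I(\ell)$ (resp. $\mu_J(\ell)$) is the number of rows in $I$ (resp. columns in $J$) not containing $\ell$. $\bar K=[k]\setminus K$ and $x\dot- y=\max\{0,x-y\}$. *)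

theory Defs
  imports Main
begin

text \<open>An array is a function L :: nat => nat => nat; only its values on the index
  range matter. rho :: nat => nat gives the prescribed multiplicity of each symbol.\<close>

definition occ :: "nat \<Rightarrow> nat \<Rightarrow> (nat \<Rightarrow> nat \<Rightarrow> nat) \<Rightarrow> nat \<Rightarrow> nat" where
  "occ r s L l = card {(i, j). i \<in> {1..r} \<and> j \<in> {1..s} \<and> L i j = l}"

definition rho_latin_rectangle ::
  "nat \<Rightarrow> (nat \<Rightarrow> nat) \<Rightarrow> nat \<Rightarrow> nat \<Rightarrow> (nat \<Rightarrow> nat \<Rightarrow> nat) \<Rightarrow> bool" where
  "rho_latin_rectangle k rho r s L \<longleftrightarrow>
     (\<forall>i\<in>{1..r}. \<forall>j\<in>{1..s}. L i j \<in> {1..k}) \<and>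
     (\<forall>i\<in>{1..r}. inj_on (\<lambda>j. L i j) {1..s}) \<and>
     (\<forall>j\<in>{1..s}. inj_on (\<lambda>i. L i j) {1..r}) \<and>
     (\<forall>l\<in>{1..k}. occ r s L l \<le> rho l)"

definition rho_latin_square ::
  "nat \<Rightarrow> (nat \<Rightarrow> nat) \<Rightarrow> nat \<Rightarrow> (nat \<Rightarrow> nat \<Rightarrow> nat) \<Rightarrow> bool" where
  "rho_latin_square k rho n M \<longleftrightarrow>
     (\<forall>i\<in>{1..n}. \<forall>j\<in>{1..n}. M i j \<in> {1..k}) \<and>
     (\<forall>i\<in>{1..n}. inj_on (\<lambda>j. M i j) {1..n}) \<and>
     (\<forall>j\<in>{1..n}. inj_on (\<lambda>i. M i j) {1..n}) \<and>
     (\<forall>l\<in>{1..k}. occ n n M l = rho l)"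

definition completable ::
  "nat \<Rightarrow> (nat \<Rightarrow> nat) \<Rightarrow> nat \<Rightarrow> nat \<Rightarrow> nat \<Rightarrow> (nat \<Rightarrow> nat \<Rightarrow> nat) \<Rightarrow> bool" where
  "completable k rho n r s L \<longleftrightarrow>
     (\<exists>M. rho_latin_square k rho n M \<and> (\<forall>i\<in>{1..r}. \<forall>j\<in>{1..s}. M i j = L i j))"

definition mu_row :: "nat \<Rightarrow> (nat \<Rightarrow> nat \<Rightarrow> nat) \<Rightarrow> nat set \<Rightarrow> nat \<Rightarrow> nat" where
  "mu_row s L K i = card {l \<in> K. \<forall>j\<in>{1..s}. L i j \<noteq> l}"

definition mu_col :: "nat \<Rightarrow> (nat \<Rightarrow> nat \<Rightarrow> nat) \<Rightarrow> nat set \<Rightarrow> nat \<Rightarrow> nat" where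
  "mu_col r L K j = card {l \<in> K. \<forall>i\<in>{1..r}. L i j \<noteq> l}"

definition mu_rows :: "nat \<Rightarrow> (nat \<Rightarrow> nat \<Rightarrow> nat) \<Rightarrow> nat set \<Rightarrow> nat \<Rightarrow> nat" where
  "mu_rows s L I l = card {i \<in> I. \<forall>j\<in>{1..s}. L i j \<noteq> l}"

definition mu_cols :: "nat \<Rightarrow> (nat \<Rightarrow> nat \<Rightarrow> nat) \<Rightarrow> nat set \<Rightarrow> nat \<Rightarrow> nat" where
  "mu_cols r L J l = card {j \<in> J. \<forall>i\<in>{1..r}. L i j \<noteq> l}"

end

theory Submission
  imports Defs
begin


lemma min_split_le:
  fixes b p q :: nat
  shows "min b (p + q) \<le> min b p + min (b - min b p) q"
  unfolding min_def by arith

lemma flow_exists: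
  fixes X :: "'a set" and Y :: "'b set" and a :: "'a \<Rightarrow> nat" and b :: "'b \<Rightarrow> nat"
    and m :: "'a \<Rightarrow> 'b \<Rightarrow> nat"
  assumes "finite X" "finite Y"
    and "\<forall>A\<subseteq>X. (\<Sum>x\<in>A. a x) \<le> (\<Sum>y\<in>Y. min (b y) (\<Sum>x\<in>A. m x y))"
  shows "\<exists>f. (\<forall>x y. f x y \<le> m x y) \<and> (\<forall>x\<in>X. (\<Sum>y\<in>Y. f x y) = a x)
             \<and> (\<forall>y\<in>Y. (\<Sum>x\<in>X. f x y) \<le> b y)"
  using assms
proof (induction "card X + sum a X" arbitrary: X a b m rule: less_induct)
  case less
  note fX = less.prems(1) and fY = less.prems(2) and cond = less.prems(3)
  show ?case
  proof (cases "sum a X = 0")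
    case True
    then have "\<forall>x\<in>X. a x = 0" using fX by simp
    then show ?thesis by (intro exI[of _ "\<lambda>x y. 0"]) auto
  next
    case False
    then obtain x0 where x0: "x0 \<in> X" "a x0 > 0"
      by (metis neq0_conv sum.neutral)
    show ?thesis
    proof (cases "\<exists>A. A \<noteq> {} \<and> A \<subset> X \<and> (\<Sum>x\<in>A. a x) = (\<Sum>y\<in>Y. min (b y) (\<Sum>x\<in>A. m x y))")
      case True
      then obtain A where A: "A \<noteq> {}" "A \<subset> X"
        and tight: "(\<Sum>x\<in>A. a x) = (\<Sum>y\<in>Y. min (b y) (\<Sum>x\<in>A. m x y))" by blast
      have fA: "finite A" using A fX finite_subset by blast
      have "card A < card X" using A fX by (simp add: psubset_card_mono)
      moreover have "sum a A \<le> sum a X" using A fX by (intro sum_mono2) auto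
      ultimately have lt1: "card A + sum a A < card X + sum a X" by simp
      have condA: "\<forall>B\<subseteq>A. (\<Sum>x\<in>B. a x) \<le> (\<Sum>y\<in>Y. min (b y) (\<Sum>x\<in>B. m x y))"
        using cond A by blast
      obtain fa where fa1: "\<forall>x y. fa x y \<le> m x y" and fa2: "\<forall>x\<in>A. (\<Sum>y\<in>Y. fa x y) = a x"
        and fa3: "\<forall>y\<in>Y. (\<Sum>x\<in>A. fa x y) \<le> b y"
        using less.hyps[OF lt1 fA fY condA] by blast
      define d where "d y = (\<Sum>x\<in>A. fa x y)" for y
      have dle: "d y \<le> min (b y) (\<Sum>x\<in>A. m x y)" if "y \<in> Y" for y
        using fa3 that fa1 unfolding d_def by (simp add: sum_mono)
      have "(\<Sum>y\<in>Y. d y) = (\<Sum>x\<in>A. \<Sum>y\<in>Y. fa x y)"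
        unfolding d_def by (rule sum.swap)
      also have "\<dots> = (\<Sum>x\<in>A. a x)" using fa2 by simp
      finally have "(\<Sum>y\<in>Y. d y) = (\<Sum>x\<in>A. a x)" .
      then have sumeq: "(\<Sum>y\<in>Y. d y) = (\<Sum>y\<in>Y. min (b y) (\<Sum>x\<in>A. m x y))" using tight by simp
      have deq: "d y = min (b y) (\<Sum>x\<in>A. m x y)" if "y \<in> Y" for y
        using sum_mono_inv[OF sumeq dle that fY] by simp
      define B where "B = X - A"
      have fB: "finite B" using fX B_def by simp
      have "card B < card X"
      proof -
        have "card B = card X - card A" unfolding B_def using A fA by (simp add: card_Diff_subset)
        moreover have "card A > 0" using A fA by (simp add: card_gt_0_iff)
        moreover have "card A \<le> card X" using A fX by (simp add: card_mono)
        ultimately show ?thesis by simp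
      qed
      moreover have "sum a B \<le> sum a X" using fX B_def by (intro sum_mono2) auto
      ultimately have lt2: "card B + sum a B < card X + sum a X" by simp
      have condB: "\<forall>C\<subseteq>B. (\<Sum>x\<in>C. a x) \<le> (\<Sum>y\<in>Y. min (b y - d y) (\<Sum>x\<in>C. m x y))"
      proof (intro allI impI)
        fix C assume C: "C \<subseteq> B"
        have fC: "finite C" using C fB finite_subset by blast
        have disj: "A \<inter> C = {}" using C B_def by blast
        have AC: "A \<union> C \<subseteq> X" using A C B_def by blast
        have "(\<Sum>x\<in>A. a x) + (\<Sum>x\<in>C. a x) = (\<Sum>x\<in>A \<union> C. a x)"
          by (simp add: sum.union_disjoint[OF fA fC disj])
        also have "\<dots> \<le> (\<Sum>y\<in>Y. min (b y) (\<Sum>x\<in>A \<union> C. m x y))" using cond AC by blast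
        also have "\<dots> = (\<Sum>y\<in>Y. min (b y) ((\<Sum>x\<in>A. m x y) + (\<Sum>x\<in>C. m x y)))"
          by (simp add: sum.union_disjoint[OF fA fC disj])
        also have "\<dots> \<le> (\<Sum>y\<in>Y. min (b y) (\<Sum>x\<in>A. m x y) + min (b y - d y) (\<Sum>x\<in>C. m x y))"
          by (intro sum_mono) (simp add: deq min_split_le)
        also have "\<dots> = (\<Sum>x\<in>A. a x) + (\<Sum>y\<in>Y. min (b y - d y) (\<Sum>x\<in>C. m x y))"
          by (simp add: sum.distrib tight)
        finally show "(\<Sum>x\<in>C. a x) \<le> (\<Sum>y\<in>Y. min (b y - d y) (\<Sum>x\<in>C. m x y))" by simp
      qed
      obtain fb where fb1: "\<forall>x y. fb x y \<le> m x y" and fb2: "\<forall>x\<in>B. (\<Sum>y\<in>Y. fb x y) = a x"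
        and fb3: "\<forall>y\<in>Y. (\<Sum>x\<in>B. fb x y) \<le> b y - d y"
        using less.hyps[OF lt2 fB fY condB] by blast
      define f where "f x y = (if x \<in> A then fa x y else fb x y)" for x y
      have XAB: "X = A \<union> B" "A \<inter> B = {}" using A B_def by auto
      have "\<forall>x y. f x y \<le> m x y" using fa1 fb1 f_def by simp
      moreover have "\<forall>x\<in>X. (\<Sum>y\<in>Y. f x y) = a x"
      proof
        fix x assume x: "x \<in> X"
        show "(\<Sum>y\<in>Y. f x y) = a x"
        proof (cases "x \<in> A")
          case True then show ?thesis using fa2 unfolding f_def by simp
        next
          case False then have "x \<in> B" using x XAB by blast
          then show ?thesis using fb2 False unfolding f_def by simp
        qed
      qed
      moreover have "\<forall>y\<in>Y. (\<Sum>x\<in>X. f x y) \<le> b y"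
      proof
        fix y assume y: "y \<in> Y"
        have "(\<Sum>x\<in>X. f x y) = (\<Sum>x\<in>A. f x y) + (\<Sum>x\<in>B. f x y)"
          using XAB fA fB sum.union_disjoint by metis
        also have "\<dots> = d y + (\<Sum>x\<in>B. fb x y)"
          unfolding f_def d_def using XAB by (auto intro!: sum.cong)
        also have "\<dots> \<le> b y" using fb3 y dle[OF y] by fastforce
        finally show "(\<Sum>x\<in>X. f x y) \<le> b y" .
      qed
      ultimately show ?thesis by blast
    next
      case False
      have strict: "(\<Sum>x\<in>A. a x) < (\<Sum>y\<in>Y. min (b y) (\<Sum>x\<in>A. m x y))"
        if "A \<noteq> {}" "A \<subset> X" for A
      proof -
        have "(\<Sum>x\<in>A. a x) \<le> (\<Sum>y\<in>Y. min (b y) (\<Sum>x\<in>A. m x y))" using cond that by blast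
        moreover have "(\<Sum>x\<in>A. a x) \<noteq> (\<Sum>y\<in>Y. min (b y) (\<Sum>x\<in>A. m x y))" using False that by blast
        ultimately show ?thesis by simp
      qed
      have "a x0 \<le> (\<Sum>y\<in>Y. min (b y) (m x0 y))" using cond[rule_format, of "{x0}"] x0(1) by simp
      then have "(\<Sum>y\<in>Y. min (b y) (m x0 y)) \<noteq> 0" using x0 by linarith
      then have "\<exists>y\<in>Y. min (b y) (m x0 y) \<noteq> 0" by (rule contrapos_np) (auto intro!: sum.neutral)
      then obtain y0 where y0: "y0 \<in> Y" "min (b y0) (m x0 y0) > 0" by blast
      define a' where "a' = a(x0 := a x0 - 1)"
      define b' where "b' = b(y0 := b y0 - 1)"
      define m' where "m' = (\<lambda>x y. if x = x0 \<and> y = y0 then m x y - 1 else m x y)"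
      have sa: "sum a' X + 1 = sum a X"
      proof -
        have "sum a X = a x0 + sum a (X - {x0})" using fX x0 by (simp add: sum.remove)
        moreover have "sum a' X = a' x0 + sum a' (X - {x0})" using fX x0 by (simp add: sum.remove)
        moreover have "sum a' (X - {x0}) = sum a (X - {x0})" unfolding a'_def by (intro sum.cong) auto
        ultimately show ?thesis using x0 unfolding a'_def by simp
      qed
      then have lt: "card X + sum a' X < card X + sum a X" by simp
      have cond': "\<forall>A\<subseteq>X. (\<Sum>x\<in>A. a' x) \<le> (\<Sum>y\<in>Y. min (b' y) (\<Sum>x\<in>A. m' x y))"
      proof (intro allI impI)
        fix A assume AX: "A \<subseteq> X"
        have fA: "finite A" using AX fX finite_subset by blast
        have other: "min (b' y) (\<Sum>x\<in>A. m' x y) = min (b y) (\<Sum>x\<in>A. m x y)" if "y \<noteq> y0" for y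
          using that unfolding b'_def m'_def by simp
        have SY: "(\<Sum>y\<in>Y. g y) = g y0 + (\<Sum>y\<in>Y - {y0}. g y)" for g :: "'b \<Rightarrow> nat"
          using fY y0 by (simp add: sum.remove)
        have rest: "(\<Sum>y\<in>Y - {y0}. min (b' y) (\<Sum>x\<in>A. m' x y)) = (\<Sum>y\<in>Y - {y0}. min (b y) (\<Sum>x\<in>A. m x y))"
          using other by (intro sum.cong) auto
        show "(\<Sum>x\<in>A. a' x) \<le> (\<Sum>y\<in>Y. min (b' y) (\<Sum>x\<in>A. m' x y))"
        proof (cases "x0 \<in> A")
          case True
          have SA: "(\<Sum>x\<in>A. g x) = g x0 + (\<Sum>x\<in>A - {x0}. g x)" for g :: "'a \<Rightarrow> nat"
            using fA True by (simp add: sum.remove)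
          have "(\<Sum>x\<in>A - {x0}. a' x) = (\<Sum>x\<in>A - {x0}. a x)" unfolding a'_def by (intro sum.cong) auto
          then have e1: "(\<Sum>x\<in>A. a' x) + 1 = (\<Sum>x\<in>A. a x)" using SA[of a] SA[of a'] x0 unfolding a'_def by simp
          have "(\<Sum>x\<in>A - {x0}. m' x y0) = (\<Sum>x\<in>A - {x0}. m x y0)" unfolding m'_def by (intro sum.cong) auto
          then have e2: "(\<Sum>x\<in>A. m' x y0) + 1 = (\<Sum>x\<in>A. m x y0)"
            using SA[of "\<lambda>x. m x y0"] SA[of "\<lambda>x. m' x y0"] y0 unfolding m'_def by simp
          have e3: "min (b' y0) (\<Sum>x\<in>A. m' x y0) + 1 = min (b y0) (\<Sum>x\<in>A. m x y0)"
            using e2 y0 unfolding b'_def by (simp add: min_def split: if_splits; arith)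
          have "(\<Sum>x\<in>A. a' x) + 1 \<le> (\<Sum>y\<in>Y. min (b y) (\<Sum>x\<in>A. m x y))" using e1 cond AX by simp
          also have "\<dots> = (\<Sum>y\<in>Y. min (b' y) (\<Sum>x\<in>A. m' x y)) + 1"
            using SY[of "\<lambda>y. min (b y) (\<Sum>x\<in>A. m x y)"] SY[of "\<lambda>y. min (b' y) (\<Sum>x\<in>A. m' x y)"] rest e3
            by simp
          finally show ?thesis by simp
        next
          case False
          have ea: "(\<Sum>x\<in>A. a' x) = (\<Sum>x\<in>A. a x)" unfolding a'_def using False by (intro sum.cong) auto
          show ?thesis
          proof (cases "A = {}")
            case True then show ?thesis by simp
          next
            case Ane: False
            have "A \<subset> X" using AX False x0 by blast
            then have s: "(\<Sum>x\<in>A. a x) < (\<Sum>y\<in>Y. min (b y) (\<Sum>x\<in>A. m x y))" using strict Ane by blast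
            have "(\<Sum>x\<in>A. m' x y0) = (\<Sum>x\<in>A. m x y0)"
              unfolding m'_def using False by (intro sum.cong) auto
            then have "min (b y0) (\<Sum>x\<in>A. m x y0) \<le> min (b' y0) (\<Sum>x\<in>A. m' x y0) + 1"
              unfolding b'_def by (simp add: min_def; arith)
            then have "(\<Sum>y\<in>Y. min (b y) (\<Sum>x\<in>A. m x y)) \<le> (\<Sum>y\<in>Y. min (b' y) (\<Sum>x\<in>A. m' x y)) + 1"
              using SY[of "\<lambda>y. min (b y) (\<Sum>x\<in>A. m x y)"] SY[of "\<lambda>y. min (b' y) (\<Sum>x\<in>A. m' x y)"] rest
              by simp
            then show ?thesis using s ea by simp
          qed
        qed
      qed
      obtain f' where f1: "\<forall>x y. f' x y \<le> m' x y" and f2: "\<forall>x\<in>X. (\<Sum>y\<in>Y. f' x y) = a' x"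
        and f3: "\<forall>y\<in>Y. (\<Sum>x\<in>X. f' x y) \<le> b' y"
        using less.hyps[OF lt fX fY cond'] by blast
      define f where "f x y = f' x y + (if x = x0 \<and> y = y0 then 1 else 0)" for x y
      have "\<forall>x y. f x y \<le> m x y"
      proof (intro allI)
        fix x y show "f x y \<le> m x y"
          using f1[rule_format, of x y] y0 unfolding f_def m'_def by (auto split: if_splits)
      qed
      moreover have "\<forall>x\<in>X. (\<Sum>y\<in>Y. f x y) = a x"
      proof
        fix x assume x: "x \<in> X"
        have "(\<Sum>y\<in>Y. f x y) = (\<Sum>y\<in>Y. f' x y) + (\<Sum>y\<in>Y. if x = x0 \<and> y = y0 then 1 else 0)"
          unfolding f_def by (simp add: sum.distrib)
        also have "(\<Sum>y\<in>Y. (if x = x0 \<and> y = y0 then 1 else 0::nat)) = (if x = x0 then 1 else 0)"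
          using fY y0 by (auto simp: sum.delta)
        finally show "(\<Sum>y\<in>Y. f x y) = a x" using f2 x x0 unfolding a'_def by auto
      qed
      moreover have "\<forall>y\<in>Y. (\<Sum>x\<in>X. f x y) \<le> b y"
      proof
        fix y assume y: "y \<in> Y"
        have "(\<Sum>x\<in>X. f x y) = (\<Sum>x\<in>X. f' x y) + (\<Sum>x\<in>X. if x = x0 \<and> y = y0 then 1 else 0)"
          unfolding f_def by (simp add: sum.distrib)
        also have "(\<Sum>x\<in>X. (if x = x0 \<and> y = y0 then 1 else 0::nat)) = (if y = y0 then 1 else 0)"
          using fX x0 by (auto simp: sum.delta)
        finally show "(\<Sum>x\<in>X. f x y) \<le> b y" using f3 y y0 unfolding b'_def by (auto split: if_splits)
      qed
      ultimately show ?thesis by blast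
    qed
  qed
qed



lemma sum_one_unique:
  fixes h :: "'b \<Rightarrow> nat"
  assumes "finite R" "(\<Sum>v\<in>R. h v) = 1" "v0 \<in> R" "h v0 > 0" "v \<in> R"
  shows "h v = (if v = v0 then 1 else 0)"
proof -
  have "(\<Sum>v\<in>R. h v) = h v0 + (\<Sum>v\<in>R - {v0}. h v)" using assms by (simp add: sum.remove)
  then have "h v0 = 1" "(\<Sum>v\<in>R - {v0}. h v) = 0" using assms by linarith+
  then show ?thesis using assms by auto
qed

lemma regular_pick:
  fixes Lf :: "'a set" and Rt :: "'b set" and m :: "'a \<Rightarrow> 'b \<Rightarrow> nat" and c :: "'b \<Rightarrow> nat" and t :: nat
  assumes fL: "finite Lf" and fR: "finite Rt" and t: "t > 0"
    and dl: "\<forall>l\<in>Lf. (\<Sum>v\<in>Rt. m l v) = t"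
    and dr: "\<forall>v\<in>Rt. (\<Sum>l\<in>Lf. m l v) = t * c v"
  shows "\<exists>g. (\<forall>l\<in>Lf. g l \<in> Rt \<and> m l (g l) > 0) \<and> (\<forall>v\<in>Rt. card {l\<in>Lf. g l = v} = c v)"
proof -
  have cond: "\<forall>A\<subseteq>Lf. (\<Sum>x\<in>A. (1::nat)) \<le> (\<Sum>y\<in>Rt. min (c y) (\<Sum>x\<in>A. m x y))"
  proof (intro allI impI)
    fix A assume A: "A \<subseteq> Lf"
    have fA: "finite A" using A fL finite_subset by blast
    have "t * (\<Sum>x\<in>A. (1::nat)) = (\<Sum>x\<in>A. \<Sum>y\<in>Rt. m x y)" using dl A by (simp add: subset_iff)
    also have "\<dots> = (\<Sum>y\<in>Rt. \<Sum>x\<in>A. m x y)" by (rule sum.swap)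
    also have "\<dots> \<le> (\<Sum>y\<in>Rt. t * min (c y) (\<Sum>x\<in>A. m x y))"
    proof (rule sum_mono)
      fix y assume y: "y \<in> Rt"
      have "(\<Sum>x\<in>A. m x y) \<le> (\<Sum>x\<in>Lf. m x y)" using A fL by (intro sum_mono2) auto
      then have "(\<Sum>x\<in>A. m x y) \<le> t * c y" using dr y by simp
      moreover have "(\<Sum>x\<in>A. m x y) \<le> t * (\<Sum>x\<in>A. m x y)" using t by simp
      ultimately show "(\<Sum>x\<in>A. m x y) \<le> t * min (c y) (\<Sum>x\<in>A. m x y)" by (simp add: min_def)
    qed
    also have "\<dots> = t * (\<Sum>y\<in>Rt. min (c y) (\<Sum>x\<in>A. m x y))" by (simp add: sum_distrib_left)
    finally show "(\<Sum>x\<in>A. (1::nat)) \<le> (\<Sum>y\<in>Rt. min (c y) (\<Sum>x\<in>A. m x y))" using t by simp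
  qed
  obtain f where f1: "\<forall>x y. f x y \<le> m x y" and f2: "\<forall>x\<in>Lf. (\<Sum>y\<in>Rt. f x y) = 1"
    and f3: "\<forall>y\<in>Rt. (\<Sum>x\<in>Lf. f x y) \<le> c y"
    using flow_exists[OF fL fR cond] by auto
  have ex: "\<exists>v\<in>Rt. f l v > 0" if "l \<in> Lf" for l
  proof (rule ccontr)
    assume "\<not> ?thesis"
    then have "(\<Sum>y\<in>Rt. f l y) = 0" by simp
    then show False using f2 that by simp
  qed
  define g where "g l = (SOME v. v \<in> Rt \<and> f l v > 0)" for l
  have g1: "g l \<in> Rt \<and> f l (g l) > 0" if "l \<in> Lf" for l
    unfolding g_def using someI_ex[OF ex[OF that, unfolded Bex_def]] .
  have fg: "f l v = (if v = g l then 1 else 0)" if "l \<in> Lf" "v \<in> Rt" for l v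
    using sum_one_unique[OF fR f2[rule_format, OF that(1)]] g1[OF that(1)] that(2) by blast
  have cardeq: "card {l\<in>Lf. g l = v} = (\<Sum>l\<in>Lf. f l v)" if "v \<in> Rt" for v
  proof -
    have "(\<Sum>l\<in>Lf. f l v) = (\<Sum>l\<in>Lf. if g l = v then 1 else 0)"
      using fg that by (intro sum.cong) auto
    also have "\<dots> = card {l\<in>Lf. g l = v}" using fL by (simp add: sum.If_cases Int_def)
    finally show ?thesis by simp
  qed
  have tot1: "(\<Sum>v\<in>Rt. \<Sum>l\<in>Lf. f l v) = card Lf"
  proof -
    have "(\<Sum>v\<in>Rt. \<Sum>l\<in>Lf. f l v) = (\<Sum>l\<in>Lf. \<Sum>v\<in>Rt. f l v)" by (rule sum.swap)
    also have "\<dots> = (\<Sum>l\<in>Lf. 1)" using f2 by simp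
    finally show ?thesis by simp
  qed
  have "t * (\<Sum>v\<in>Rt. c v) = (\<Sum>v\<in>Rt. \<Sum>l\<in>Lf. m l v)" using dr by (simp add: sum_distrib_left)
  also have "\<dots> = (\<Sum>l\<in>Lf. \<Sum>v\<in>Rt. m l v)" by (rule sum.swap)
  also have "\<dots> = t * card Lf" using dl by simp
  finally have tot2: "(\<Sum>v\<in>Rt. c v) = card Lf" using t by simp
  have "\<forall>v\<in>Rt. (\<Sum>l\<in>Lf. f l v) = c v"
    using sum_mono_inv[of "\<lambda>v. \<Sum>l\<in>Lf. f l v" Rt c] tot1 tot2 f3 fR by auto
  then show ?thesis using g1 f1 cardeq
    by (intro exI[of _ g]) (metis (no_types, lifting) order_less_le_trans)
qed



lemma card_filter_sum:
  "finite I \<Longrightarrow> card {i\<in>I. P i} = (\<Sum>i\<in>I. if P i then 1 else 0)"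
  by (simp add: sum.If_cases Int_def)

lemma dcount:
  assumes "finite I" "finite K"
  shows "(\<Sum>l\<in>K. card {i\<in>I. P i l}) = (\<Sum>i\<in>I. card {l\<in>K. P i l})"
proof -
  have "(\<Sum>l\<in>K. card {i\<in>I. P i l}) = (\<Sum>l\<in>K. \<Sum>i\<in>I. if P i l then 1 else 0)"
    using assms by (simp add: card_filter_sum)
  also have "\<dots> = (\<Sum>i\<in>I. \<Sum>l\<in>K. if P i l then 1 else 0)" by (rule sum.swap)
  also have "\<dots> = (\<Sum>i\<in>I. card {l\<in>K. P i l})" using assms by (simp add: card_filter_sum)
  finally show ?thesis .
qed

lemma occ_ext:
  assumes "\<forall>i\<in>{1..r}. \<forall>j\<in>{1..s}. L' i j = L i j"
  shows "occ r s L' l = occ r s L l"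
proof -
  have "{(i, j). i \<in> {1..r} \<and> j \<in> {1..s} \<and> L' i j = l} = {(i, j). i \<in> {1..r} \<and> j \<in> {1..s} \<and> L i j = l}"
    using assms by auto
  then show ?thesis unfolding occ_def by simp
qed

lemma occ_Suc_col:
  "occ r (Suc s) L l = occ r s L l + card {i\<in>{1..r}. L i (Suc s) = l}"
proof -
  let ?S = "{(i, j). i \<in> {1..r} \<and> j \<in> {1..s} \<and> L i j = l}"
  let ?T = "(\<lambda>i. (i, Suc s)) ` {i\<in>{1..r}. L i (Suc s) = l}"
  have eq: "{(i, j). i \<in> {1..r} \<and> j \<in> {1..Suc s} \<and> L i j = l} = ?S \<union> ?T"
    by (auto simp: le_Suc_eq)
  have fS: "finite ?S" by (rule finite_subset[of _ "{1..r} \<times> {1..s}"]) auto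
  have fT: "finite ?T" by simp
  have dj: "?S \<inter> ?T = {}" by auto
  have "card ?T = card {i\<in>{1..r}. L i (Suc s) = l}" by (rule card_image) (simp add: inj_on_def)
  then show ?thesis unfolding occ_def eq using card_Un_disjoint[OF fS fT dj] by simp
qed

lemma occ_transpose:
  "occ s r (\<lambda>i j. L j i) l = occ r s L l"
proof -
  have "{(i, j). i \<in> {1..s} \<and> j \<in> {1..r} \<and> L j i = l} = (\<lambda>(i, j). (j, i)) ` {(i, j). i \<in> {1..r} \<and> j \<in> {1..s} \<and> L i j = l}"
    by auto
  moreover have "inj_on (\<lambda>(i, j). (j, i)) X" for X :: "(nat \<times> nat) set" by (auto simp: inj_on_def)
  ultimately show ?thesis unfolding occ_def by (simp add: card_image)
qed

lemma occ_total:
  assumes "\<forall>i\<in>{1..r}. \<forall>j\<in>{1..s}. L i j \<in> {1..k}"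
  shows "(\<Sum>l\<in>{1..k}. occ r s L l) = r * s"
proof -
  let ?P = "{1..r} \<times> {1..s}"
  have "(\<Sum>l\<in>{1..k}. occ r s L l) = card (\<Union>l\<in>{1..k}. {(i, j). i \<in> {1..r} \<and> j \<in> {1..s} \<and> L i j = l})"
    unfolding occ_def
  proof (rule card_UN_disjoint[symmetric])
    show "finite {1..k}" by simp
    show "\<forall>l\<in>{1..k}. finite {(i, j). i \<in> {1..r} \<and> j \<in> {1..s} \<and> L i j = l}"
      by (rule ballI, rule finite_subset[of _ ?P]) auto
    show "\<forall>l\<in>{1..k}. \<forall>l'\<in>{1..k}. l \<noteq> l' \<longrightarrow> {(i, j). i \<in> {1..r} \<and> j \<in> {1..s} \<and> L i j = l} \<inter> {(i, j). i \<in> {1..r} \<and> j \<in> {1..s} \<and> L i j = l'} = {}"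
      by blast
  qed
  also have "(\<Union>l\<in>{1..k}. {(i, j). i \<in> {1..r} \<and> j \<in> {1..s} \<and> L i j = l}) = ?P"
  proof
    show "(\<Union>l\<in>{1..k}. {(i, j). i \<in> {1..r} \<and> j \<in> {1..s} \<and> L i j = l}) \<subseteq> ?P" by blast
    show "?P \<subseteq> (\<Union>l\<in>{1..k}. {(i, j). i \<in> {1..r} \<and> j \<in> {1..s} \<and> L i j = l})"
    proof
      fix x assume "x \<in> ?P"
      then obtain i j where x: "x = (i, j)" "i \<in> {1..r}" "j \<in> {1..s}" by blast
      then have "L i j \<in> {1..k}" using assms by blast
      then show "x \<in> (\<Union>l\<in>{1..k}. {(i, j). i \<in> {1..r} \<and> j \<in> {1..s} \<and> L i j = l})"
        using x by blast
    qed
  qed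
  finally show ?thesis by simp
qed



definition cntR :: "nat \<Rightarrow> (nat \<Rightarrow> nat set) \<Rightarrow> nat \<Rightarrow> nat" where
  "cntR r R l = card {i\<in>{1..r}. l \<in> R i}"

definition outline :: "nat \<Rightarrow> nat \<Rightarrow> (nat \<Rightarrow> nat) \<Rightarrow> nat \<Rightarrow> nat \<Rightarrow> (nat \<Rightarrow> nat \<Rightarrow> nat)
   \<Rightarrow> (nat \<Rightarrow> nat set) \<Rightarrow> (nat \<Rightarrow> nat set) \<Rightarrow> (nat \<Rightarrow> nat) \<Rightarrow> bool" where
  "outline n k rho r s L R C w \<longleftrightarrow>
     r \<le> n \<and> s \<le> n \<and> n \<le> k \<and>
     (\<forall>i\<in>{1..r}. \<forall>j\<in>{1..s}. L i j \<in> {1..k}) \<and>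
     (\<forall>i\<in>{1..r}. inj_on (\<lambda>j. L i j) {1..s}) \<and>
     (\<forall>j\<in>{1..s}. inj_on (\<lambda>i. L i j) {1..r}) \<and>
     (\<forall>i\<in>{1..r}. R i \<subseteq> {1..k} \<and> card (R i) = n - s \<and> (\<forall>j\<in>{1..s}. L i j \<notin> R i)) \<and>
     (\<forall>j\<in>{1..s}. C j \<subseteq> {1..k} \<and> card (C j) = n - r \<and> (\<forall>i\<in>{1..r}. L i j \<notin> C j)) \<and>
     (\<forall>l\<in>{1..k}. cntR r R l + w l \<le> n - s \<and> cntR s C l + w l \<le> n - r \<and>
         occ r s L l + cntR r R l + cntR s C l + w l = rho l) \<and>
     (\<Sum>l\<in>{1..k}. w l) = (n - r) * (n - s)"

lemma sum_cntR:
  assumes "\<forall>i\<in>{1..r}. R i \<subseteq> {1..k} \<and> card (R i) = t"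
  shows "(\<Sum>l\<in>{1..k}. cntR r R l) = r * t"
proof -
  have "(\<Sum>l\<in>{1..k}. cntR r R l) = (\<Sum>i\<in>{1..r}. card {l\<in>{1..k}. l \<in> R i})"
    unfolding cntR_def by (rule dcount) auto
  also have "\<dots> = (\<Sum>i\<in>{1..r}. t)"
  proof (rule sum.cong)
    fix i assume "i \<in> {1..r}"
    then have "R i \<subseteq> {1..k}" "card (R i) = t" using assms by auto
    then have "{l\<in>{1..k}. l \<in> R i} = R i" "card (R i) = t" by auto
    then show "card {l\<in>{1..k}. l \<in> R i} = t" by simp
  qed simp
  finally show ?thesis by simp
qed



lemma col_step:
  assumes O: "outline n k rho r s L R C w" and sn: "s < n"
  shows "\<exists>L' R' C' w'. outline n k rho r (Suc s) L' R' C' w' \<and> (\<forall>i\<in>{1..r}. \<forall>j\<in>{1..s}. L' i j = L i j)"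
proof -
  have rn: "r \<le> n" "n \<le> k" using O unfolding outline_def by blast+
  have vals: "\<forall>i\<in>{1..r}. \<forall>j\<in>{1..s}. L i j \<in> {1..k}" using O unfolding outline_def by blast
  have rowinj: "\<forall>i\<in>{1..r}. inj_on (\<lambda>j. L i j) {1..s}" using O unfolding outline_def by blast
  have colinj: "\<forall>j\<in>{1..s}. inj_on (\<lambda>i. L i j) {1..r}" using O unfolding outline_def by blast
  have Rp: "\<forall>i\<in>{1..r}. R i \<subseteq> {1..k} \<and> card (R i) = n - s \<and> (\<forall>j\<in>{1..s}. L i j \<notin> R i)"
    using O unfolding outline_def by blast
  have Cp: "\<forall>j\<in>{1..s}. C j \<subseteq> {1..k} \<and> card (C j) = n - r \<and> (\<forall>i\<in>{1..r}. L i j \<notin> C j)"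
    using O unfolding outline_def by blast
  have cnt: "\<forall>l\<in>{1..k}. cntR r R l + w l \<le> n - s \<and> cntR s C l + w l \<le> n - r \<and>
         occ r s L l + cntR r R l + cntR s C l + w l = rho l" using O unfolding outline_def by blast
  have sw: "(\<Sum>l\<in>{1..k}. w l) = (n - r) * (n - s)" using O unfolding outline_def by blast
  define t where "t = n - s"
  have t0: "t > 0" using sn t_def by simp
  define m where "m l v = (if v = 0 then w l else if v = Suc r then t - (cntR r R l + w l)
                           else (if l \<in> R v then 1 else 0))" for l v
  define c where "c v = (if v = 0 then n - r else if v = Suc r then k - n else 1)" for v :: nat
  have Rt: "{0..Suc r} = insert 0 (insert (Suc r) {1..r})" by auto
  have dl: "\<forall>l\<in>{1..k}. (\<Sum>v\<in>{0..Suc r}. m l v) = t"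
  proof
    fix l assume l: "l \<in> {1..k}"
    have "(\<Sum>v\<in>{0..Suc r}. m l v) = m l 0 + (m l (Suc r) + (\<Sum>v\<in>{1..r}. m l v))"
      unfolding Rt by simp
    also have "(\<Sum>v\<in>{1..r}. m l v) = (\<Sum>v\<in>{1..r}. if l \<in> R v then 1 else 0)"
      unfolding m_def by (intro sum.cong) auto
    also have "\<dots> = cntR r R l" unfolding cntR_def by (rule card_filter_sum[symmetric]) simp
    finally have e: "(\<Sum>v\<in>{0..Suc r}. m l v) = m l 0 + (m l (Suc r) + cntR r R l)" .
    have "cntR r R l + w l \<le> t" using cnt l t_def by blast
    then show "(\<Sum>v\<in>{0..Suc r}. m l v) = t" unfolding e unfolding m_def by simp
  qed
  have sR: "(\<Sum>l\<in>{1..k}. cntR r R l) = r * t" using sum_cntR[of r R k t] Rp t_def by blast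
  have dr: "\<forall>v\<in>{0..Suc r}. (\<Sum>l\<in>{1..k}. m l v) = t * c v"
  proof
    fix v assume v: "v \<in> {0..Suc r}"
    show "(\<Sum>l\<in>{1..k}. m l v) = t * c v"
    proof (cases "v = 0")
      case True then show ?thesis using sw t_def unfolding m_def c_def by (simp add: mult.commute)
    next
      case v0: False
      show ?thesis
      proof (cases "v = Suc r")
        case True
        have le: "cntR r R l + w l \<le> t" if "l \<in> {1..k}" for l using cnt that t_def by blast
        have "(\<Sum>l\<in>{1..k}. m l v) = (\<Sum>l\<in>{1..k}. t - (cntR r R l + w l))"
          unfolding m_def using True by simp
        also have "\<dots> = (\<Sum>l\<in>{1..k}. t) - (\<Sum>l\<in>{1..k}. cntR r R l + w l)"
          by (rule sum_subtractf_nat) (use le in blast)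
        also have "(\<Sum>l\<in>{1..k}. cntR r R l + w l) = r * t + (n - r) * t"
          using sR sw t_def by (simp add: sum.distrib)
        also have "r * t + (n - r) * t = n * t" using rn by (simp add: add_mult_distrib[symmetric])
        finally have "(\<Sum>l\<in>{1..k}. m l v) = k * t - n * t" by simp
        then show ?thesis using True v0 unfolding c_def by (simp add: diff_mult_distrib2 mult.commute)
      next
        case False
        then have v1: "v \<in> {1..r}" using v v0 by auto
        have "(\<Sum>l\<in>{1..k}. m l v) = (\<Sum>l\<in>{1..k}. if l \<in> R v then 1 else 0)"
          unfolding m_def using v0 False by simp
        also have "\<dots> = card {l\<in>{1..k}. l \<in> R v}" by (rule card_filter_sum[symmetric]) simp
        also have "{l\<in>{1..k}. l \<in> R v} = R v"
        proof -
          have "R v \<subseteq> {1..k}" using Rp v1 by blast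
          then show ?thesis by auto
        qed
        finally show ?thesis using Rp v1 t_def v0 False unfolding c_def by simp
      qed
    qed
  qed
  obtain g where g1: "\<forall>l\<in>{1..k}. g l \<in> {0..Suc r} \<and> m l (g l) > 0"
    and g2: "\<forall>v\<in>{0..Suc r}. card {l\<in>{1..k}. g l = v} = c v"
    using regular_pick[of "{1..k}" "{0..Suc r}" t m c] t0 dl dr by auto
  have "\<forall>i\<in>{1..r}. \<exists>x. {l\<in>{1..k}. g l = i} = {x}"
  proof
    fix i assume i: "i \<in> {1..r}"
    then have "card {l\<in>{1..k}. g l = i} = 1" using g2 unfolding c_def by auto
    then show "\<exists>x. {l\<in>{1..k}. g l = i} = {x}" by (simp add: card_1_singleton_iff)
  qed
  then obtain p where p: "\<forall>i\<in>{1..r}. {l\<in>{1..k}. g l = i} = {p i}" by metis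
  have pk: "p i \<in> {1..k}" "g (p i) = i" if "i \<in> {1..r}" for i using p that by blast+
  have pu: "l = p i" if "l \<in> {1..k}" "g l = i" "i \<in> {1..r}" for l i using p that by blast
  have mg: "m l (g l) > 0" if "l \<in> {1..k}" for l using g1 that by blast
  have pR: "p i \<in> R i" if "i \<in> {1..r}" for i
  proof -
    have "m (p i) i > 0" using mg[OF pk(1)[OF that]] pk(2)[OF that] by simp
    moreover have "i \<noteq> 0" "i \<noteq> Suc r" using that by auto
    ultimately show ?thesis unfolding m_def by (simp split: if_splits)
  qed
  have gw: "w l > 0" if "l \<in> {1..k}" "g l = 0" for l using mg[OF that(1)] that(2) unfolding m_def by simp
  have gz: "cntR r R l + w l < t" if "l \<in> {1..k}" "g l = Suc r" for l
    using mg[OF that(1)] that(2) unfolding m_def by simp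
  have gR: "l \<in> R (g l)" if "l \<in> {1..k}" "g l \<in> {1..r}" for l
  proof -
    have "g l \<noteq> 0" "g l \<noteq> Suc r" using that by auto
    then show ?thesis using mg[OF that(1)] unfolding m_def by (simp split: if_splits)
  qed
  define L' where "L' i j = (if j = Suc s then p i else L i j)" for i j
  define R' where "R' i = R i - {p i}" for i
  define C' where "C' j = (if j = Suc s then {l\<in>{1..k}. g l = 0} else C j)" for j
  define w' where "w' l = (if g l = 0 then w l - 1 else w l)" for l
  have agree: "\<forall>i\<in>{1..r}. \<forall>j\<in>{1..s}. L' i j = L i j" unfolding L'_def by auto
  have lp: "l = p i \<longleftrightarrow> g l = i" if "l \<in> {1..k}" "i \<in> {1..r}" for l i
    using pk[OF that(2)] pu[OF that(1) _ that(2)] by blast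
  have cR': "cntR r R' l + (if g l \<in> {1..r} then 1 else 0) = cntR r R l" if l: "l \<in> {1..k}" for l
  proof (cases "g l \<in> {1..r}")
    case True
    have "{i\<in>{1..r}. l \<in> R' i} = {i\<in>{1..r}. l \<in> R i} - {g l}"
    proof (rule set_eqI)
      fix i show "i \<in> {i\<in>{1..r}. l \<in> R' i} \<longleftrightarrow> i \<in> {i\<in>{1..r}. l \<in> R i} - {g l}"
      proof (cases "i \<in> {1..r}")
        case True then show ?thesis unfolding R'_def using lp[OF l True] by auto
      qed auto
    qed
    moreover have "g l \<in> {i\<in>{1..r}. l \<in> R i}" using True gR[OF l True] by simp
    ultimately have "card {i\<in>{1..r}. l \<in> R' i} = card {i\<in>{1..r}. l \<in> R i} - 1"
      by (simp add: card_Diff_singleton)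
    moreover have "card {i\<in>{1..r}. l \<in> R i} > 0"
      using \<open>g l \<in> {i\<in>{1..r}. l \<in> R i}\<close> by (auto simp: card_gt_0_iff)
    ultimately show ?thesis using True unfolding cntR_def by simp
  next
    case False
    have "{i\<in>{1..r}. l \<in> R' i} = {i\<in>{1..r}. l \<in> R i}"
    proof (rule set_eqI)
      fix i show "i \<in> {i\<in>{1..r}. l \<in> R' i} \<longleftrightarrow> i \<in> {i\<in>{1..r}. l \<in> R i}"
      proof (cases "i \<in> {1..r}")
        case True then show ?thesis unfolding R'_def using lp[OF l True] False by auto
      qed auto
    qed
    then show ?thesis using False unfolding cntR_def by simp
  qed
  have cC': "cntR (Suc s) C' l = cntR s C l + (if g l = 0 then 1 else 0)" if l: "l \<in> {1..k}" for l
  proof -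
    have e: "{j\<in>{1..Suc s}. l \<in> C' j} = {j\<in>{1..s}. l \<in> C j} \<union> (if g l = 0 then {Suc s} else {})"
      unfolding C'_def using l by (auto simp: le_Suc_eq)
    have f: "finite {j\<in>{1..s}. l \<in> C j}" by simp
    show ?thesis unfolding cntR_def e using f by (auto)
  qed
  have oc': "occ r (Suc s) L' l = occ r s L l + (if g l \<in> {1..r} then 1 else 0)" if l: "l \<in> {1..k}" for l
  proof -
    have "{i\<in>{1..r}. L' i (Suc s) = l} = (if g l \<in> {1..r} then {g l} else {})"
    proof (rule set_eqI)
      fix i show "i \<in> {i\<in>{1..r}. L' i (Suc s) = l} \<longleftrightarrow> i \<in> (if g l \<in> {1..r} then {g l} else {})"
      proof (cases "i \<in> {1..r}")
        case True then show ?thesis unfolding L'_def using lp[OF l True] by auto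
      qed auto
    qed
    then have "card {i\<in>{1..r}. L' i (Suc s) = l} = (if g l \<in> {1..r} then 1 else 0)" by simp
    then show ?thesis using occ_Suc_col[of r s L' l] occ_ext[OF agree] by simp
  qed
  have ww: "w' l + (if g l = 0 then 1 else 0) = w l" if "l \<in> {1..k}" for l
    using gw[OF that] unfolding w'_def by auto
  have c0: "card {l\<in>{1..k}. g l = 0} = n - r" using g2 unfolding c_def by auto
  have "(\<Sum>l\<in>{1..k}. w' l) + (n - r) = (\<Sum>l\<in>{1..k}. w l)"
  proof -
    have "(\<Sum>l\<in>{1..k}. w l) = (\<Sum>l\<in>{1..k}. w' l + (if g l = 0 then 1 else 0))"
      using ww by (intro sum.cong) auto
    also have "\<dots> = (\<Sum>l\<in>{1..k}. w' l) + (\<Sum>l\<in>{1..k}. if g l = 0 then 1 else 0)"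
      by (simp add: sum.distrib)
    also have "(\<Sum>l\<in>{1..k}. if g l = 0 then 1 else 0) = card {l\<in>{1..k}. g l = 0}"
      by (rule card_filter_sum[symmetric]) simp
    finally show ?thesis using c0 by simp
  qed
  then have sw': "(\<Sum>l\<in>{1..k}. w' l) = (n - r) * (n - Suc s)"
  proof -
    have "n - s = Suc (n - Suc s)" using sn by simp
    then have "(n - r) * (n - s) = (n - r) * (n - Suc s) + (n - r)" by simp
    then show ?thesis using sw \<open>(\<Sum>l\<in>{1..k}. w' l) + (n - r) = (\<Sum>l\<in>{1..k}. w l)\<close> by linarith
  qed
  have O': "outline n k rho r (Suc s) L' R' C' w'"
    unfolding outline_def
  proof (intro conjI)
    show "r \<le> n" "Suc s \<le> n" "n \<le> k" using rn sn by auto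
    show "\<forall>i\<in>{1..r}. \<forall>j\<in>{1..Suc s}. L' i j \<in> {1..k}"
      using vals pk unfolding L'_def by (auto simp: le_Suc_eq)
    show "\<forall>i\<in>{1..r}. inj_on (\<lambda>j. L' i j) {1..Suc s}"
    proof
      fix i assume i: "i \<in> {1..r}"
      have e: "{1..Suc s} = insert (Suc s) {1..s}" by auto
      have "inj_on (\<lambda>j. L' i j) {1..s}" using rowinj i agree inj_on_cong by (metis (mono_tags, lifting))
      moreover have "L' i (Suc s) \<notin> (\<lambda>j. L' i j) ` {1..s}"
      proof
        assume "L' i (Suc s) \<in> (\<lambda>j. L' i j) ` {1..s}"
        then obtain j where j: "j \<in> {1..s}" "L' i (Suc s) = L' i j" by blast
        then have "p i = L i j" unfolding L'_def by simp
        moreover have "L i j \<notin> R i" using Rp i j(1) by blast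
        ultimately show False using pR[OF i] by simp
      qed
      ultimately show "inj_on (\<lambda>j. L' i j) {1..Suc s}" unfolding e by simp
    qed
    show "\<forall>j\<in>{1..Suc s}. inj_on (\<lambda>i. L' i j) {1..r}"
    proof
      fix j assume j: "j \<in> {1..Suc s}"
      show "inj_on (\<lambda>i. L' i j) {1..r}"
      proof (cases "j = Suc s")
        case True
        have "inj_on p {1..r}"
        proof (rule inj_onI)
          fix a b assume "a \<in> {1..r}" "b \<in> {1..r}" "p a = p b"
          then show "a = b" using pk(2) by metis
        qed
        then show ?thesis unfolding L'_def using True by simp
      next
        case False
        then have j': "j \<in> {1..s}" using j by auto
        have "(\<lambda>i. L' i j) = (\<lambda>i. L i j)" unfolding L'_def using False by simp
        then show ?thesis using colinj j' by simp
      qed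
    qed
    show "\<forall>i\<in>{1..r}. R' i \<subseteq> {1..k} \<and> card (R' i) = n - Suc s \<and> (\<forall>j\<in>{1..Suc s}. L' i j \<notin> R' i)"
    proof
      fix i assume i: "i \<in> {1..r}"
      have "R i \<subseteq> {1..k}" "card (R i) = n - s" "\<forall>j\<in>{1..s}. L i j \<notin> R i" using Rp i by auto
      moreover have "finite (R i)" using \<open>R i \<subseteq> {1..k}\<close> finite_subset by blast
      ultimately show "R' i \<subseteq> {1..k} \<and> card (R' i) = n - Suc s \<and> (\<forall>j\<in>{1..Suc s}. L' i j \<notin> R' i)"
        unfolding R'_def L'_def using pR[OF i] by (auto simp: card_Diff_singleton le_Suc_eq)
    qed
    show "\<forall>j\<in>{1..Suc s}. C' j \<subseteq> {1..k} \<and> card (C' j) = n - r \<and> (\<forall>i\<in>{1..r}. L' i j \<notin> C' j)"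
    proof
      fix j assume j: "j \<in> {1..Suc s}"
      show "C' j \<subseteq> {1..k} \<and> card (C' j) = n - r \<and> (\<forall>i\<in>{1..r}. L' i j \<notin> C' j)"
      proof (cases "j = Suc s")
        case True
        have "\<forall>i\<in>{1..r}. p i \<notin> {l\<in>{1..k}. g l = 0}"
        proof
          fix i assume "i \<in> {1..r}"
          then have "g (p i) \<noteq> 0" using pk(2) by auto
          then show "p i \<notin> {l\<in>{1..k}. g l = 0}" by simp
        qed
        then show ?thesis unfolding C'_def L'_def using c0 True by auto
      next
        case False
        then have j': "j \<in> {1..s}" using j by auto
        have "C j \<subseteq> {1..k} \<and> card (C j) = n - r \<and> (\<forall>i\<in>{1..r}. L i j \<notin> C j)" using Cp j' by blast
        then show ?thesis unfolding C'_def L'_def using False by simp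
      qed
    qed
    show "\<forall>l\<in>{1..k}. cntR r R' l + w' l \<le> n - Suc s \<and> cntR (Suc s) C' l + w' l \<le> n - r \<and>
         occ r (Suc s) L' l + cntR r R' l + cntR (Suc s) C' l + w' l = rho l"
    proof
      fix l assume l: "l \<in> {1..k}"
      have c1: "cntR r R l + w l \<le> t" "cntR s C l + w l \<le> n - r"
        "occ r s L l + cntR r R l + cntR s C l + w l = rho l" using cnt l t_def by auto
      note e1 = cR'[OF l] and e2 = cC'[OF l] and e3 = oc'[OF l] and e4 = ww[OF l]
      have "g l \<in> {0..Suc r}" using g1 l by blast
      then have gcases: "g l = 0 \<or> g l \<in> {1..r} \<or> g l = Suc r" by (auto simp: le_Suc_eq)
      show "cntR r R' l + w' l \<le> n - Suc s \<and> cntR (Suc s) C' l + w' l \<le> n - r \<and>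
         occ r (Suc s) L' l + cntR r R' l + cntR (Suc s) C' l + w' l = rho l"
        using gcases
      proof (elim disjE)
        assume a: "g l = 0"
        then show ?thesis using c1 e1 e2 e3 e4 gw[OF l a] t_def by auto
      next
        assume a: "g l \<in> {1..r}"
        then have "g l \<noteq> 0" by auto
        then show ?thesis using a c1 e1 e2 e3 e4 t_def by auto
      next
        assume a: "g l = Suc r"
        then show ?thesis using c1 e1 e2 e3 e4 gz[OF l a] t_def by auto
      qed
    qed
    show "(\<Sum>l\<in>{1..k}. w' l) = (n - r) * (n - Suc s)" by (rule sw')
  qed
  show ?thesis using O' agree by blast
qed



lemma outline_transpose:
  assumes "outline n k rho r s L R C w"
  shows "outline n k rho s r (\<lambda>i j. L j i) C R w"
proof -
  have a: "r \<le> n" "s \<le> n" "n \<le> k"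
     "\<forall>i\<in>{1..r}. \<forall>j\<in>{1..s}. L i j \<in> {1..k}"
     "\<forall>i\<in>{1..r}. inj_on (\<lambda>j. L i j) {1..s}"
     "\<forall>j\<in>{1..s}. inj_on (\<lambda>i. L i j) {1..r}"
     "\<forall>i\<in>{1..r}. R i \<subseteq> {1..k} \<and> card (R i) = n - s \<and> (\<forall>j\<in>{1..s}. L i j \<notin> R i)"
     "\<forall>j\<in>{1..s}. C j \<subseteq> {1..k} \<and> card (C j) = n - r \<and> (\<forall>i\<in>{1..r}. L i j \<notin> C j)"
     "\<forall>l\<in>{1..k}. cntR r R l + w l \<le> n - s \<and> cntR s C l + w l \<le> n - r \<and>
         occ r s L l + cntR r R l + cntR s C l + w l = rho l"
     "(\<Sum>l\<in>{1..k}. w l) = (n - r) * (n - s)"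
    using assms unfolding outline_def by blast+
  show ?thesis unfolding outline_def
  proof (intro conjI)
    show "s \<le> n" "r \<le> n" "n \<le> k" using a by auto
    show "\<forall>i\<in>{1..s}. \<forall>j\<in>{1..r}. L j i \<in> {1..k}" using a(4) by blast
    show "\<forall>i\<in>{1..s}. inj_on (\<lambda>j. L j i) {1..r}" using a(6) by blast
    show "\<forall>j\<in>{1..r}. inj_on (\<lambda>i. L j i) {1..s}" using a(5) by blast
    show "\<forall>i\<in>{1..s}. C i \<subseteq> {1..k} \<and> card (C i) = n - r \<and> (\<forall>j\<in>{1..r}. L j i \<notin> C i)" using a(8) by blast
    show "\<forall>j\<in>{1..r}. R j \<subseteq> {1..k} \<and> card (R j) = n - s \<and> (\<forall>i\<in>{1..s}. L j i \<notin> R j)" using a(7) by blast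
    show "\<forall>l\<in>{1..k}. cntR s C l + w l \<le> n - r \<and> cntR r R l + w l \<le> n - s \<and>
         occ s r (\<lambda>i j. L j i) l + cntR s C l + cntR r R l + w l = rho l"
    proof
      fix l assume l: "l \<in> {1..k}"
      have e: "occ s r (\<lambda>i j. L j i) l = occ r s L l" by (rule occ_transpose)
      have "cntR r R l + w l \<le> n - s \<and> cntR s C l + w l \<le> n - r \<and>
         occ r s L l + cntR r R l + cntR s C l + w l = rho l" using a(9) l by blast
      then show "cntR s C l + w l \<le> n - r \<and> cntR r R l + w l \<le> n - s \<and>
         occ s r (\<lambda>i j. L j i) l + cntR s C l + cntR r R l + w l = rho l" unfolding e by linarith
    qed
    show "(\<Sum>l\<in>{1..k}. w l) = (n - s) * (n - r)" using a(10) by (simp add: mult.commute)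
  qed
qed

lemma outline_full:
  assumes O: "outline n k rho n n L R C w"
  shows "rho_latin_square k rho n L"
proof -
  have Rp: "\<forall>i\<in>{1..n}. R i \<subseteq> {1..k} \<and> card (R i) = n - n" using O unfolding outline_def by blast
  have Cp: "\<forall>j\<in>{1..n}. C j \<subseteq> {1..k} \<and> card (C j) = n - n" using O unfolding outline_def by blast
  have Re: "R i = {}" if "i \<in> {1..n}" for i
  proof -
    have "R i \<subseteq> {1..k}" "card (R i) = 0" using Rp that by auto
    then show ?thesis using finite_subset by fastforce
  qed
  have Ce: "C i = {}" if "i \<in> {1..n}" for i
  proof -
    have "C i \<subseteq> {1..k}" "card (C i) = 0" using Cp that by auto
    then show ?thesis using finite_subset by fastforce
  qed
  have c0: "cntR n R l = 0" "cntR n C l = 0" for l unfolding cntR_def using Re Ce by auto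
  have cnt: "\<forall>l\<in>{1..k}. cntR n R l + w l \<le> n - n \<and>
         occ n n L l + cntR n R l + cntR n C l + w l = rho l" using O unfolding outline_def by blast
  show ?thesis unfolding rho_latin_square_def
  proof (intro conjI)
    show "\<forall>i\<in>{1..n}. \<forall>j\<in>{1..n}. L i j \<in> {1..k}" using O unfolding outline_def by blast
    show "\<forall>i\<in>{1..n}. inj_on (\<lambda>j. L i j) {1..n}" using O unfolding outline_def by blast
    show "\<forall>j\<in>{1..n}. inj_on (\<lambda>i. L i j) {1..n}" using O unfolding outline_def by blast
    show "\<forall>l\<in>{1..k}. occ n n L l = rho l" using cnt c0 by auto
  qed
qed

lemma outline_complete:
  assumes "outline n k rho r s L R C w"
  shows "\<exists>M. rho_latin_square k rho n M \<and> (\<forall>i\<in>{1..r}. \<forall>j\<in>{1..s}. M i j = L i j)"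
  using assms
proof (induction "(n - r) + (n - s)" arbitrary: r s L R C w rule: less_induct)
  case less
  have rn: "r \<le> n" "s \<le> n" using less.prems unfolding outline_def by blast+
  show ?case
  proof (cases "s < n")
    case True
    obtain L' R' C' w' where O': "outline n k rho r (Suc s) L' R' C' w'"
      and ag: "\<forall>i\<in>{1..r}. \<forall>j\<in>{1..s}. L' i j = L i j"
      using col_step[OF less.prems True] by blast
    have "(n - r) + (n - Suc s) < (n - r) + (n - s)" using True by simp
    then obtain M where M: "rho_latin_square k rho n M" "\<forall>i\<in>{1..r}. \<forall>j\<in>{1..Suc s}. M i j = L' i j"
      using less.hyps O' by blast
    then show ?thesis using ag by auto
  next
    case sF: False
    then have sn: "s = n" using rn by simp
    show ?thesis
    proof (cases "r < n")
      case True
      have OT: "outline n k rho s r (\<lambda>i j. L j i) C R w" by (rule outline_transpose[OF less.prems])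
      have rs: "r < s" using True sn by simp
      obtain L' R' C' w' where O': "outline n k rho s (Suc r) L' R' C' w'"
        and ag: "\<forall>i\<in>{1..s}. \<forall>j\<in>{1..r}. L' i j = L j i"
        using col_step[OF OT] True sn by blast
      have O2: "outline n k rho (Suc r) s (\<lambda>i j. L' j i) C' R' w'" by (rule outline_transpose[OF O'])
      have "(n - Suc r) + (n - s) < (n - r) + (n - s)" using True by simp
      then obtain M where M: "rho_latin_square k rho n M" "\<forall>i\<in>{1..Suc r}. \<forall>j\<in>{1..s}. M i j = L' j i"
        using less.hyps O2 by blast
      then show ?thesis using ag by auto
    next
      case False
      then have "r = n" using rn by simp
      then have "outline n k rho n n L R C w" using less.prems sn by simp
      then show ?thesis using outline_full by blast
    qed
  qed
qed



lemma swap_row: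
  "finite I \<Longrightarrow> finite K \<Longrightarrow> (\<Sum>i\<in>I. mu_row s L K i) = (\<Sum>l\<in>K. mu_rows s L I l)"
  unfolding mu_row_def mu_rows_def by (rule dcount[symmetric])

lemma swap_col:
  "finite J \<Longrightarrow> finite K \<Longrightarrow> (\<Sum>j\<in>J. mu_col r L K j) = (\<Sum>l\<in>K. mu_cols r L J l)"
  unfolding mu_col_def mu_cols_def by (rule dcount[symmetric])

lemma sum_split_min:
  fixes b g :: "nat \<Rightarrow> nat"
  assumes "K \<subseteq> {1..k}"
  shows "(\<Sum>l\<in>{1..k}. min (b l) (g l)) \<le> (\<Sum>l\<in>K. b l) + (\<Sum>l\<in>{1..k} - K. g l)"
proof -
  have fK: "finite K" using assms finite_subset by blast
  have "(\<Sum>l\<in>{1..k}. min (b l) (g l)) = (\<Sum>l\<in>K. min (b l) (g l)) + (\<Sum>l\<in>{1..k} - K. min (b l) (g l))"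
    using sum.subset_diff[OF assms finite_atLeastAtMost, of "\<lambda>l. min (b l) (g l)"] by (simp only: add.commute)
  also have "\<dots> \<le> (\<Sum>l\<in>K. b l) + (\<Sum>l\<in>{1..k} - K. g l)"
    by (intro add_mono sum_mono) auto
  finally show ?thesis .
qed

lemma sum_split_min_eq:
  fixes b g :: "nat \<Rightarrow> nat"
  shows "(\<Sum>l\<in>{1..k}. min (b l) (g l)) = (\<Sum>l\<in>{l\<in>{1..k}. b l \<le> g l}. b l) + (\<Sum>l\<in>{1..k} - {l\<in>{1..k}. b l \<le> g l}. g l)"
proof -
  let ?K = "{l\<in>{1..k}. b l \<le> g l}"
  have sub: "?K \<subseteq> {1..k}" by auto
  have "(\<Sum>l\<in>{1..k}. min (b l) (g l)) = (\<Sum>l\<in>?K. min (b l) (g l)) + (\<Sum>l\<in>{1..k} - ?K. min (b l) (g l))"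
    using sum.subset_diff[OF sub finite_atLeastAtMost, of "\<lambda>l. min (b l) (g l)"] by (simp only: add.commute)
  also have "(\<Sum>l\<in>?K. min (b l) (g l)) = (\<Sum>l\<in>?K. b l)" by (intro sum.cong) auto
  also have "(\<Sum>l\<in>{1..k} - ?K. min (b l) (g l)) = (\<Sum>l\<in>{1..k} - ?K. g l)" by (intro sum.cong) auto
  finally show ?thesis .
qed

lemma cond1_imp_cond2:
  fixes b :: "nat \<Rightarrow> nat"
  assumes c1: "\<forall>I J. I \<subseteq> {1..r} \<longrightarrow> J \<subseteq> {1..s} \<longrightarrow>
              card I * (n - s) + card J * (n - r) \<le>
              (\<Sum>l\<in>{1..k}. min (b l) (mu_rows s L I l + mu_cols r L J l))"
  shows "\<forall>I J K. I \<subseteq> {1..r} \<longrightarrow> J \<subseteq> {1..s} \<longrightarrow> K \<subseteq> {1..k} \<longrightarrow>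
              (\<Sum>l\<in>K. b l) \<ge>
              (\<Sum>i\<in>I. (n - s) - mu_row s L ({1..k} - K) i) +
              (\<Sum>j\<in>J. (n - r) - mu_col r L ({1..k} - K) j)"
proof (intro allI impI)
  fix I J K assume I: "I \<subseteq> {1..r}" and J: "J \<subseteq> {1..s}" and K: "K \<subseteq> {1..k}"
  let ?K' = "{1..k} - K"
  define I' where "I' = {i\<in>I. mu_row s L ?K' i < n - s}"
  define J' where "J' = {j\<in>J. mu_col r L ?K' j < n - r}"
  have fI: "finite I" using I finite_subset by blast
  have fJ: "finite J" using J finite_subset by blast
  have fI': "finite I'" "I' \<subseteq> {1..r}" using fI I unfolding I'_def by auto
  have fJ': "finite J'" "J' \<subseteq> {1..s}" using fJ J unfolding J'_def by auto
  have e1: "(\<Sum>i\<in>I. (n - s) - mu_row s L ?K' i) = (\<Sum>i\<in>I'. (n - s) - mu_row s L ?K' i)"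
    unfolding I'_def using fI by (intro sum.mono_neutral_right) auto
  have e2: "(\<Sum>j\<in>J. (n - r) - mu_col r L ?K' j) = (\<Sum>j\<in>J'. (n - r) - mu_col r L ?K' j)"
    unfolding J'_def using fJ by (intro sum.mono_neutral_right) auto
  have a1: "(\<Sum>i\<in>I'. (n - s) - mu_row s L ?K' i) + (\<Sum>i\<in>I'. mu_row s L ?K' i) = card I' * (n - s)"
  proof -
    have "(\<Sum>i\<in>I'. (n - s) - mu_row s L ?K' i) + (\<Sum>i\<in>I'. mu_row s L ?K' i)
        = (\<Sum>i\<in>I'. ((n - s) - mu_row s L ?K' i) + mu_row s L ?K' i)" by (simp add: sum.distrib)
    also have "\<dots> = (\<Sum>i\<in>I'. n - s)" unfolding I'_def by (intro sum.cong) auto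
    finally show ?thesis by simp
  qed
  have a2: "(\<Sum>j\<in>J'. (n - r) - mu_col r L ?K' j) + (\<Sum>j\<in>J'. mu_col r L ?K' j) = card J' * (n - r)"
  proof -
    have "(\<Sum>j\<in>J'. (n - r) - mu_col r L ?K' j) + (\<Sum>j\<in>J'. mu_col r L ?K' j)
        = (\<Sum>j\<in>J'. ((n - r) - mu_col r L ?K' j) + mu_col r L ?K' j)" by (simp add: sum.distrib)
    also have "\<dots> = (\<Sum>j\<in>J'. n - r)" unfolding J'_def by (intro sum.cong) auto
    finally show ?thesis by simp
  qed
  have "card I' * (n - s) + card J' * (n - r) \<le> (\<Sum>l\<in>{1..k}. min (b l) (mu_rows s L I' l + mu_cols r L J' l))"
    using c1 fI' fJ' by blast
  also have "\<dots> \<le> (\<Sum>l\<in>K. b l) + (\<Sum>l\<in>?K'. mu_rows s L I' l + mu_cols r L J' l)"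
    by (rule sum_split_min[OF K])
  also have "(\<Sum>l\<in>?K'. mu_rows s L I' l + mu_cols r L J' l) = (\<Sum>i\<in>I'. mu_row s L ?K' i) + (\<Sum>j\<in>J'. mu_col r L ?K' j)"
    using swap_row[OF fI'(1), of ?K' s L] swap_col[OF fJ'(1), of ?K' r L] by (simp add: sum.distrib)
  finally show "(\<Sum>l\<in>K. b l) \<ge> (\<Sum>i\<in>I. (n - s) - mu_row s L ?K' i) + (\<Sum>j\<in>J. (n - r) - mu_col r L ?K' j)"
    unfolding e1 e2 using a1 a2 by linarith
qed

lemma cond2_imp_cond1:
  fixes b :: "nat \<Rightarrow> nat"
  assumes c2: "\<forall>I J K. I \<subseteq> {1..r} \<longrightarrow> J \<subseteq> {1..s} \<longrightarrow> K \<subseteq> {1..k} \<longrightarrow>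
              (\<Sum>l\<in>K. b l) \<ge>
              (\<Sum>i\<in>I. (n - s) - mu_row s L ({1..k} - K) i) +
              (\<Sum>j\<in>J. (n - r) - mu_col r L ({1..k} - K) j)"
  shows "\<forall>I J. I \<subseteq> {1..r} \<longrightarrow> J \<subseteq> {1..s} \<longrightarrow>
              card I * (n - s) + card J * (n - r) \<le>
              (\<Sum>l\<in>{1..k}. min (b l) (mu_rows s L I l + mu_cols r L J l))"
proof (intro allI impI)
  fix I J assume I: "I \<subseteq> {1..r}" and J: "J \<subseteq> {1..s}"
  define g where "g l = mu_rows s L I l + mu_cols r L J l" for l
  define K where "K = {l\<in>{1..k}. b l \<le> g l}"
  let ?K' = "{1..k} - K"
  have K: "K \<subseteq> {1..k}" unfolding K_def by auto
  have fI: "finite I" using I finite_subset by blast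
  have fJ: "finite J" using J finite_subset by blast
  have "(\<Sum>l\<in>K. b l) \<ge> (\<Sum>i\<in>I. (n - s) - mu_row s L ?K' i) + (\<Sum>j\<in>J. (n - r) - mu_col r L ?K' j)"
    using c2 I J K by blast
  moreover have "card I * (n - s) \<le> (\<Sum>i\<in>I. (n - s) - mu_row s L ?K' i) + (\<Sum>i\<in>I. mu_row s L ?K' i)"
  proof -
    have "card I * (n - s) = (\<Sum>i\<in>I. n - s)" by simp
    also have "\<dots> \<le> (\<Sum>i\<in>I. ((n - s) - mu_row s L ?K' i) + mu_row s L ?K' i)" by (intro sum_mono) auto
    finally show ?thesis by (simp add: sum.distrib)
  qed
  moreover have "card J * (n - r) \<le> (\<Sum>j\<in>J. (n - r) - mu_col r L ?K' j) + (\<Sum>j\<in>J. mu_col r L ?K' j)"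
  proof -
    have "card J * (n - r) = (\<Sum>j\<in>J. n - r)" by simp
    also have "\<dots> \<le> (\<Sum>j\<in>J. ((n - r) - mu_col r L ?K' j) + mu_col r L ?K' j)" by (intro sum_mono) auto
    finally show ?thesis by (simp add: sum.distrib)
  qed
  moreover have "(\<Sum>i\<in>I. mu_row s L ?K' i) + (\<Sum>j\<in>J. mu_col r L ?K' j) = (\<Sum>l\<in>?K'. g l)"
    using swap_row[OF fI, of ?K' s L] swap_col[OF fJ, of ?K' r L] unfolding g_def by (simp add: sum.distrib)
  moreover have "(\<Sum>l\<in>{1..k}. min (b l) (g l)) = (\<Sum>l\<in>K. b l) + (\<Sum>l\<in>?K'. g l)"
    unfolding K_def by (rule sum_split_min_eq)
  ultimately show "card I * (n - s) + card J * (n - r) \<le> (\<Sum>l\<in>{1..k}. min (b l) (mu_rows s L I l + mu_cols r L J l))"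
    unfolding g_def by linarith
qed



lemma sum_card_fibers:
  assumes "finite S" "finite K" "\<forall>x\<in>S. f x \<in> K"
  shows "(\<Sum>l\<in>K. card {x\<in>S. f x = l}) = card S"
proof -
  have "(\<Sum>l\<in>K. card {x\<in>S. f x = l}) = (\<Sum>x\<in>S. card {l\<in>K. f x = l})"
    by (rule dcount[OF assms(1,2)])
  also have "\<dots> = (\<Sum>x\<in>S. 1)"
  proof (rule sum.cong)
    fix x assume "x \<in> S"
    then have "{l\<in>K. f x = l} = {f x}" using assms(3) by auto
    then show "card {l\<in>K. f x = l} = 1" by simp
  qed simp
  finally show ?thesis by simp
qed

lemma necessity:
  assumes sq: "rho_latin_square k rho n M" and ag: "\<forall>i\<in>{1..r}. \<forall>j\<in>{1..s}. M i j = L i j"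
    and rn: "r \<le> n" and sn: "s \<le> n" and I: "I \<subseteq> {1..r}" and J: "J \<subseteq> {1..s}"
  shows "card I * (n - s) + card J * (n - r) \<le>
     (\<Sum>l\<in>{1..k}. min (rho l - occ r s L l) (mu_rows s L I l + mu_cols r L J l))"
proof -
  have vals: "\<forall>i\<in>{1..n}. \<forall>j\<in>{1..n}. M i j \<in> {1..k}" using sq unfolding rho_latin_square_def by blast
  have rinj: "\<forall>i\<in>{1..n}. inj_on (\<lambda>j. M i j) {1..n}" using sq unfolding rho_latin_square_def by blast
  have cinj: "\<forall>j\<in>{1..n}. inj_on (\<lambda>i. M i j) {1..n}" using sq unfolding rho_latin_square_def by blast
  have occM: "\<forall>l\<in>{1..k}. occ n n M l = rho l" using sq unfolding rho_latin_square_def by blast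
  have fI: "finite I" using I finite_subset by blast
  have fJ: "finite J" using J finite_subset by blast
  define A where "A l = {x\<in>I \<times> {Suc s..n}. M (fst x) (snd x) = l}" for l
  define B where "B l = {x\<in>{Suc r..n} \<times> J. M (fst x) (snd x) = l}" for l
  define E where "E l = {(i, j). i \<in> {1..r} \<and> j \<in> {1..s} \<and> L i j = l}" for l
  define F where "F l = {(i, j). i \<in> {1..n} \<and> j \<in> {1..n} \<and> M i j = l}" for l
  have SA: "(\<Sum>l\<in>{1..k}. card (A l)) = card I * (n - s)"
  proof -
    have "(\<Sum>l\<in>{1..k}. card (A l)) = card (I \<times> {Suc s..n})" unfolding A_def
    proof (rule sum_card_fibers)
      show "finite (I \<times> {Suc s..n})" using fI by simp
      show "\<forall>x\<in>I \<times> {Suc s..n}. M (fst x) (snd x) \<in> {1..k}" using vals I rn by fastforce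
    qed simp
    then show ?thesis by (simp add: card_cartesian_product)
  qed
  have SB: "(\<Sum>l\<in>{1..k}. card (B l)) = card J * (n - r)"
  proof -
    have "(\<Sum>l\<in>{1..k}. card (B l)) = card ({Suc r..n} \<times> J)" unfolding B_def
    proof (rule sum_card_fibers)
      show "finite ({Suc r..n} \<times> J)" using fJ by simp
      show "\<forall>x\<in>{Suc r..n} \<times> J. M (fst x) (snd x) \<in> {1..k}" using vals J sn by fastforce
    qed simp
    then show ?thesis by (simp add: card_cartesian_product)
  qed
  have bound: "card (A l) + card (B l) \<le> min (rho l - occ r s L l) (mu_rows s L I l + mu_cols r L J l)"
    if l: "l \<in> {1..k}" for l
  proof -
    have fF: "finite (F l)" unfolding F_def by (rule finite_subset[of _ "{1..n} \<times> {1..n}"]) auto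
    have fA: "finite (A l)" unfolding A_def using fI by simp
    have fB: "finite (B l)" unfolding B_def using fJ by simp
    have fE: "finite (E l)" unfolding E_def by (rule finite_subset[of _ "{1..r} \<times> {1..s}"]) auto
    have sub: "A l \<union> B l \<union> E l \<subseteq> F l"
    proof
      fix x assume x: "x \<in> A l \<union> B l \<union> E l"
      obtain i j where ij: "x = (i, j)" by fastforce
      show "x \<in> F l"
      proof (cases "x \<in> E l")
        case True
        then have "i \<in> {1..r}" "j \<in> {1..s}" "L i j = l" unfolding E_def ij by auto
        then show ?thesis unfolding F_def ij using ag rn sn by auto
      next
        case False
        then have "x \<in> A l \<or> x \<in> B l" using x by blast
        then show ?thesis unfolding F_def A_def B_def ij using I J rn sn by auto
      qed
    qed
    have d1: "A l \<inter> B l = {}" unfolding A_def B_def using I by auto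
    have d2: "(A l \<union> B l) \<inter> E l = {}" unfolding A_def B_def E_def using I J by auto
    have "card (A l) + card (B l) + occ r s L l = card (A l \<union> B l \<union> E l)"
      unfolding occ_def E_def[symmetric]
      using card_Un_disjoint[OF fA fB d1] card_Un_disjoint[OF _ fE d2] fA fB by simp
    also have "\<dots> \<le> card (F l)" using card_mono[OF fF sub] .
    also have "card (F l) = rho l" using occM l unfolding occ_def F_def by simp
    finally have b1: "card (A l) + card (B l) \<le> rho l - occ r s L l" by simp
    have bA: "card (A l) \<le> mu_rows s L I l"
      unfolding mu_rows_def
    proof (rule card_inj_on_le[of fst])
      show "inj_on fst (A l)"
      proof (rule inj_onI)
        fix x y assume x: "x \<in> A l" and y: "y \<in> A l" and e: "fst x = fst y"
        obtain i j where xi: "x = (i, j)" by fastforce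
        obtain i' j' where yi: "y = (i', j')" by fastforce
        have "i \<in> {1..n}" "j \<in> {1..n}" "j' \<in> {1..n}" "M i j = l" "M i j' = l" "i = i'"
          using x y e I rn unfolding A_def xi yi by auto
        then have "j = j'" using rinj unfolding inj_on_def by metis
        then show "x = y" using xi yi \<open>i = i'\<close> by simp
      qed
      show "fst ` A l \<subseteq> {i\<in>I. \<forall>j\<in>{1..s}. L i j \<noteq> l}"
      proof
        fix i assume "i \<in> fst ` A l"
        then obtain j where ij: "(i, j) \<in> A l" by force
        then have i: "i \<in> I" "j \<in> {Suc s..n}" "M i j = l" unfolding A_def by auto
        have "\<forall>j'\<in>{1..s}. L i j' \<noteq> l"
        proof (intro ballI notI)
          fix j' assume j': "j' \<in> {1..s}" "L i j' = l"
          then have "M i j' = l" using ag i I by auto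
          moreover have "i \<in> {1..n}" "j' \<in> {1..n}" "j \<in> {1..n}" using i j' I rn sn by auto
          ultimately have "j = j'" using rinj i(3) unfolding inj_on_def by metis
          then show False using i j' by auto
        qed
        then show "i \<in> {i\<in>I. \<forall>j\<in>{1..s}. L i j \<noteq> l}" using i by blast
      qed
      show "finite {i\<in>I. \<forall>j\<in>{1..s}. L i j \<noteq> l}" using fI by simp
    qed
    have bB: "card (B l) \<le> mu_cols r L J l"
      unfolding mu_cols_def
    proof (rule card_inj_on_le[of snd])
      show "inj_on snd (B l)"
      proof (rule inj_onI)
        fix x y assume x: "x \<in> B l" and y: "y \<in> B l" and e: "snd x = snd y"
        obtain i j where xi: "x = (i, j)" by fastforce
        obtain i' j' where yi: "y = (i', j')" by fastforce
        have "j \<in> {1..n}" "i \<in> {1..n}" "i' \<in> {1..n}" "M i j = l" "M i' j = l" "j = j'"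
          using x y e J sn unfolding B_def xi yi by auto
        then have "i = i'" using cinj unfolding inj_on_def by metis
        then show "x = y" using xi yi \<open>j = j'\<close> by simp
      qed
      show "snd ` B l \<subseteq> {j\<in>J. \<forall>i\<in>{1..r}. L i j \<noteq> l}"
      proof
        fix j assume "j \<in> snd ` B l"
        then obtain i where ij: "(i, j) \<in> B l" by force
        then have j: "j \<in> J" "i \<in> {Suc r..n}" "M i j = l" unfolding B_def by auto
        have "\<forall>i'\<in>{1..r}. L i' j \<noteq> l"
        proof (intro ballI notI)
          fix i' assume i': "i' \<in> {1..r}" "L i' j = l"
          then have "M i' j = l" using ag j J by auto
          moreover have "j \<in> {1..n}" "i' \<in> {1..n}" "i \<in> {1..n}" using j i' J rn sn by auto
          ultimately have "i = i'" using cinj j(3) unfolding inj_on_def by metis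
          then show False using j i' by auto
        qed
        then show "j \<in> {j\<in>J. \<forall>i\<in>{1..r}. L i j \<noteq> l}" using j by blast
      qed
      show "finite {j\<in>J. \<forall>i\<in>{1..r}. L i j \<noteq> l}" using fJ by simp
    qed
    show ?thesis using b1 bA bB by simp
  qed
  have "card I * (n - s) + card J * (n - r) = (\<Sum>l\<in>{1..k}. card (A l) + card (B l))"
    using SA SB by (simp add: sum.distrib)
  also have "\<dots> \<le> (\<Sum>l\<in>{1..k}. min (rho l - occ r s L l) (mu_rows s L I l + mu_cols r L J l))"
    by (rule sum_mono) (rule bound)
  finally show ?thesis .
qed



lemma sum_Inl_Inr:
  assumes "finite I" "finite J"
  shows "(\<Sum>x\<in>Inl ` I \<union> Inr ` J. h x) = (\<Sum>i\<in>I. h (Inl i)) + (\<Sum>j\<in>J. h (Inr j))"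
proof -
  have "(\<Sum>x\<in>Inl ` I \<union> Inr ` J. h x) = (\<Sum>x\<in>Inl ` I. h x) + (\<Sum>x\<in>Inr ` J. h x)"
    by (rule sum.union_disjoint) (use assms in auto)
  also have "(\<Sum>x\<in>Inl ` I. h x) = (\<Sum>i\<in>I. h (Inl i))" by (simp add: sum.reindex)
  also have "(\<Sum>x\<in>Inr ` J. h x) = (\<Sum>j\<in>J. h (Inr j))" by (simp add: sum.reindex)
  finally show ?thesis .
qed

lemma sum_01:
  fixes g :: "'a \<Rightarrow> nat"
  assumes "finite K" "\<forall>l. g l \<le> 1"
  shows "(\<Sum>l\<in>K. g l) = card {l\<in>K. g l = 1}"
proof -
  have "(\<Sum>l\<in>K. g l) = (\<Sum>l\<in>K. if g l = 1 then 1 else 0)"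
  proof (rule sum.cong)
    fix l assume "l \<in> K" show "g l = (if g l = 1 then 1 else 0)" using assms(2)[rule_format, of l] by auto
  qed simp
  also have "\<dots> = card {l\<in>K. g l = 1}" by (rule card_filter_sum[symmetric]) (rule assms(1))
  finally show ?thesis .
qed

lemma sufficiency:
  assumes nk: "n \<le> k" and rn: "r \<le> n" and sn: "s \<le> n"
    and rsum: "(\<Sum>l\<in>{1..k}. rho l) = n ^ 2"
    and rect: "rho_latin_rectangle k rho r s L"
    and hyp: "\<forall>l\<in>{1..k}. int (occ r s L l) \<ge> int (rho l) - int n + int (max r s)"
    and c1: "\<forall>I J. I \<subseteq> {1..r} \<longrightarrow> J \<subseteq> {1..s} \<longrightarrow>
              card I * (n - s) + card J * (n - r) \<le>
              (\<Sum>l\<in>{1..k}. min (rho l - occ r s L l) (mu_rows s L I l + mu_cols r L J l))"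
  shows "completable k rho n r s L"
proof -
  have vals: "\<forall>i\<in>{1..r}. \<forall>j\<in>{1..s}. L i j \<in> {1..k}" using rect unfolding rho_latin_rectangle_def by blast
  have rinj: "\<forall>i\<in>{1..r}. inj_on (\<lambda>j. L i j) {1..s}" using rect unfolding rho_latin_rectangle_def by blast
  have cinj: "\<forall>j\<in>{1..s}. inj_on (\<lambda>i. L i j) {1..r}" using rect unfolding rho_latin_rectangle_def by blast
  have ole: "\<forall>l\<in>{1..k}. occ r s L l \<le> rho l" using rect unfolding rho_latin_rectangle_def by blast
  define b where "b l = rho l - occ r s L l" for l
  have bmax: "b l \<le> n - max r s" if "l \<in> {1..k}" for l
  proof -
    have h: "int (occ r s L l) \<ge> int (rho l) - int n + int (max r s)" using hyp that by blast
    have o: "occ r s L l \<le> rho l" using ole that by blast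
    have m: "max r s \<le> n" using rn sn by simp
    show ?thesis unfolding b_def using h o m by linarith
  qed
  define X where "X = Inl ` {1..r} \<union> Inr ` {1..s}"
  define a where "a x = (case x of Inl _ \<Rightarrow> n - s | Inr _ \<Rightarrow> n - r)" for x :: "nat + nat"
  define mm where "mm x l = ((case x of Inl i \<Rightarrow> (if \<forall>j\<in>{1..s}. L i j \<noteq> l then 1 else 0)
       | Inr j \<Rightarrow> (if \<forall>i\<in>{1..r}. L i j \<noteq> l then 1 else 0)) :: nat)" for x :: "nat + nat" and l :: nat
  have fX: "finite X" unfolding X_def by simp
  have cond: "\<forall>A\<subseteq>X. (\<Sum>x\<in>A. a x) \<le> (\<Sum>y\<in>{1..k}. min (b y) (\<Sum>x\<in>A. mm x y))"
  proof (intro allI impI)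
    fix A assume AX: "A \<subseteq> X"
    define I where "I = {i. Inl i \<in> A}"
    define J where "J = {j. Inr j \<in> A}"
    have I: "I \<subseteq> {1..r}" unfolding I_def using AX X_def by auto
    have J: "J \<subseteq> {1..s}" unfolding J_def using AX X_def by auto
    have fI: "finite I" using I finite_subset by blast
    have fJ: "finite J" using J finite_subset by blast
    have Aeq: "A = Inl ` I \<union> Inr ` J" unfolding I_def J_def
    proof (rule set_eqI)
      fix x show "x \<in> A \<longleftrightarrow> x \<in> Inl ` {i. Inl i \<in> A} \<union> Inr ` {j. Inr j \<in> A}"
        by (cases x) auto
    qed
    have sa: "(\<Sum>x\<in>A. a x) = card I * (n - s) + card J * (n - r)"
      unfolding Aeq sum_Inl_Inr[OF fI fJ] a_def by simp
    have sm: "(\<Sum>x\<in>A. mm x l) = mu_rows s L I l + mu_cols r L J l" for l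
    proof -
      have "(\<Sum>x\<in>A. mm x l) = (\<Sum>i\<in>I. if \<forall>j\<in>{1..s}. L i j \<noteq> l then 1 else 0) + (\<Sum>j\<in>J. if \<forall>i\<in>{1..r}. L i j \<noteq> l then 1 else 0)"
        unfolding Aeq sum_Inl_Inr[OF fI fJ] mm_def by simp
      also have "\<dots> = mu_rows s L I l + mu_cols r L J l"
        unfolding mu_rows_def mu_cols_def using card_filter_sum[OF fI] card_filter_sum[OF fJ] by simp
      finally show ?thesis .
    qed
    show "(\<Sum>x\<in>A. a x) \<le> (\<Sum>y\<in>{1..k}. min (b y) (\<Sum>x\<in>A. mm x y))"
      unfolding sa sm b_def using c1 I J by blast
  qed
  obtain f where f1: "\<forall>x y. f x y \<le> mm x y" and f2: "\<forall>x\<in>X. (\<Sum>y\<in>{1..k}. f x y) = a x"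
    and f3: "\<forall>y\<in>{1..k}. (\<Sum>x\<in>X. f x y) \<le> b y"
    using flow_exists[OF fX _ cond] by auto
  have mm1: "mm x l \<le> 1" for x l unfolding mm_def by (cases x) auto
  have f01: "\<forall>l. f x l \<le> 1" for x using f1 mm1 le_trans by blast
  define R where "R i = {l\<in>{1..k}. f (Inl i) l = 1}" for i
  define C where "C j = {l\<in>{1..k}. f (Inr j) l = 1}" for j
  have cardR: "card (R i) = n - s" if "i \<in> {1..r}" for i
  proof -
    have "card (R i) = (\<Sum>l\<in>{1..k}. f (Inl i) l)" unfolding R_def by (rule sum_01[symmetric]) (use f01 in auto)
    also have "\<dots> = n - s" using f2 that unfolding X_def a_def by auto
    finally show ?thesis .
  qed
  have cardC: "card (C j) = n - r" if "j \<in> {1..s}" for j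
  proof -
    have "card (C j) = (\<Sum>l\<in>{1..k}. f (Inr j) l)" unfolding C_def by (rule sum_01[symmetric]) (use f01 in auto)
    also have "\<dots> = n - r" using f2 that unfolding X_def a_def by auto
    finally show ?thesis .
  qed
  have disR: "L i j \<notin> R i" if "i \<in> {1..r}" "j \<in> {1..s}" for i j
  proof
    assume "L i j \<in> R i"
    then have "f (Inl i) (L i j) = 1" unfolding R_def by auto
    moreover have "mm (Inl i) (L i j) = 0" unfolding mm_def using that by auto
    ultimately show False using f1 by (metis le_zero_eq zero_neq_one)
  qed
  have disC: "L i j \<notin> C j" if "i \<in> {1..r}" "j \<in> {1..s}" for i j
  proof
    assume "L i j \<in> C j"
    then have "f (Inr j) (L i j) = 1" unfolding C_def by auto
    moreover have "mm (Inr j) (L i j) = 0" unfolding mm_def using that by auto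
    ultimately show False using f1 by (metis le_zero_eq zero_neq_one)
  qed
  have cR: "cntR r R l = (\<Sum>i\<in>{1..r}. f (Inl i) l)" if "l \<in> {1..k}" for l
  proof -
    have "(\<Sum>i\<in>{1..r}. f (Inl i) l) = card {i\<in>{1..r}. f (Inl i) l = 1}" by (rule sum_01) (use f01 in auto)
    also have "{i\<in>{1..r}. f (Inl i) l = 1} = {i\<in>{1..r}. l \<in> R i}" unfolding R_def using that by auto
    finally show ?thesis unfolding cntR_def by simp
  qed
  have cC: "cntR s C l = (\<Sum>j\<in>{1..s}. f (Inr j) l)" if "l \<in> {1..k}" for l
  proof -
    have "(\<Sum>j\<in>{1..s}. f (Inr j) l) = card {j\<in>{1..s}. f (Inr j) l = 1}" by (rule sum_01) (use f01 in auto)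
    also have "{j\<in>{1..s}. f (Inr j) l = 1} = {j\<in>{1..s}. l \<in> C j}" unfolding C_def using that by auto
    finally show ?thesis unfolding cntR_def by simp
  qed
  have cb: "cntR r R l + cntR s C l \<le> b l" if "l \<in> {1..k}" for l
  proof -
    have "(\<Sum>x\<in>X. f x l) \<le> b l" using f3 that by blast
    moreover have "(\<Sum>x\<in>X. f x l) = (\<Sum>i\<in>{1..r}. f (Inl i) l) + (\<Sum>j\<in>{1..s}. f (Inr j) l)"
      unfolding X_def by (rule sum_Inl_Inr) auto
    ultimately show ?thesis using cR[OF that] cC[OF that] by simp
  qed
  define w where "w l = b l - (cntR r R l + cntR s C l)" for l
  have sR: "(\<Sum>l\<in>{1..k}. cntR r R l) = r * (n - s)"
    by (rule sum_cntR) (use cardR in \<open>auto simp: R_def\<close>)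
  have sC: "(\<Sum>l\<in>{1..k}. cntR s C l) = s * (n - r)"
    by (rule sum_cntR) (use cardC in \<open>auto simp: C_def\<close>)
  have so: "(\<Sum>l\<in>{1..k}. occ r s L l) = r * s" by (rule occ_total[OF vals])
  have sb: "(\<Sum>l\<in>{1..k}. b l) + r * s = n ^ 2"
  proof -
    have "(\<Sum>l\<in>{1..k}. b l) + (\<Sum>l\<in>{1..k}. occ r s L l) = (\<Sum>l\<in>{1..k}. b l + occ r s L l)"
      by (simp add: sum.distrib)
    also have "\<dots> = (\<Sum>l\<in>{1..k}. rho l)" unfolding b_def using ole by (intro sum.cong) auto
    finally show ?thesis using so rsum by simp
  qed
  have swsum: "(\<Sum>l\<in>{1..k}. w l) + r * (n - s) + s * (n - r) = (\<Sum>l\<in>{1..k}. b l)"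
  proof -
    have "(\<Sum>l\<in>{1..k}. w l) + ((\<Sum>l\<in>{1..k}. cntR r R l) + (\<Sum>l\<in>{1..k}. cntR s C l))
          = (\<Sum>l\<in>{1..k}. w l + (cntR r R l + cntR s C l))" by (simp add: sum.distrib)
    also have "\<dots> = (\<Sum>l\<in>{1..k}. b l)" unfolding w_def using cb by (intro sum.cong) auto
    finally show ?thesis using sR sC by simp
  qed
  have sw: "(\<Sum>l\<in>{1..k}. w l) = (n - r) * (n - s)"
  proof -
    obtain p q where p: "n = r + p" and q: "n = s + q" using rn sn le_Suc_ex by metis
    have e1: "n - r = p" "n - s = q" using p q by simp_all
    have "n * n = (r + p) * (s + q)" using p q by metis
    then have e2: "n ^ 2 = r * s + r * q + p * s + p * q" by (simp add: power2_eq_square algebra_simps)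
    have e3: "s * p = p * s" by simp
    have "(\<Sum>l\<in>{1..k}. w l) + r * q + s * p + r * s = n ^ 2" using swsum sb e1 by simp
    then show ?thesis using e1 e2 e3 by simp
  qed
  have O: "outline n k rho r s L R C w"
    unfolding outline_def
  proof (intro conjI)
    show "r \<le> n" "s \<le> n" "n \<le> k" by fact+
    show "\<forall>i\<in>{1..r}. \<forall>j\<in>{1..s}. L i j \<in> {1..k}" by (rule vals)
    show "\<forall>i\<in>{1..r}. inj_on (\<lambda>j. L i j) {1..s}" by (rule rinj)
    show "\<forall>j\<in>{1..s}. inj_on (\<lambda>i. L i j) {1..r}" by (rule cinj)
    show "\<forall>i\<in>{1..r}. R i \<subseteq> {1..k} \<and> card (R i) = n - s \<and> (\<forall>j\<in>{1..s}. L i j \<notin> R i)"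
      using cardR disR unfolding R_def by auto
    show "\<forall>j\<in>{1..s}. C j \<subseteq> {1..k} \<and> card (C j) = n - r \<and> (\<forall>i\<in>{1..r}. L i j \<notin> C j)"
      using cardC disC unfolding C_def by auto
    show "\<forall>l\<in>{1..k}. cntR r R l + w l \<le> n - s \<and> cntR s C l + w l \<le> n - r \<and>
         occ r s L l + cntR r R l + cntR s C l + w l = rho l"
    proof
      fix l assume l: "l \<in> {1..k}"
      have "b l \<le> n - max r s" by (rule bmax[OF l])
      moreover have "occ r s L l \<le> rho l" using ole l by blast
      ultimately show "cntR r R l + w l \<le> n - s \<and> cntR s C l + w l \<le> n - r \<and>
         occ r s L l + cntR r R l + cntR s C l + w l = rho l"
        using cb[OF l] unfolding w_def b_def by auto
    qed
    show "(\<Sum>l\<in>{1..k}. w l) = (n - r) * (n - s)" by (rule sw)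
  qed
  obtain M where "rho_latin_square k rho n M" "\<forall>i\<in>{1..r}. \<forall>j\<in>{1..s}. M i j = L i j"
    using outline_complete[OF O] by blast
  then show ?thesis unfolding completable_def by blast
qed


theorem corollary5p2:
  fixes n k r s :: nat and rho :: "nat \<Rightarrow> nat" and L :: "nat \<Rightarrow> nat \<Rightarrow> nat"
  assumes "0 < n" "0 < k" "n \<le> k"
    and "\<forall>l\<in>{1..k}. 1 \<le> rho l \<and> rho l \<le> n"
    and "(\<Sum>l\<in>{1..k}. rho l) = n ^ 2"
    and "1 \<le> r" "1 \<le> s" "r \<le> n" "s \<le> n" "min r s < n"
    and "rho_latin_rectangle k rho r s L"
    and "\<forall>l\<in>{1..k}. int (occ r s L l) \<ge> int (rho l) - int n + int (max r s)"
  shows "(completable k rho n r s L \<longleftrightarrow>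
           (\<forall>I J. I \<subseteq> {1..r} \<longrightarrow> J \<subseteq> {1..s} \<longrightarrow>
              card I * (n - s) + card J * (n - r) \<le>
              (\<Sum>l\<in>{1..k}. min (rho l - occ r s L l) (mu_rows s L I l + mu_cols r L J l))))
       \<and> (completable k rho n r s L \<longleftrightarrow>
           (\<forall>I J K. I \<subseteq> {1..r} \<longrightarrow> J \<subseteq> {1..s} \<longrightarrow> K \<subseteq> {1..k} \<longrightarrow>
              (\<Sum>l\<in>K. rho l - occ r s L l) \<ge>
              (\<Sum>i\<in>I. (n - s) - mu_row s L ({1..k} - K) i) +
              (\<Sum>j\<in>J. (n - r) - mu_col r L ({1..k} - K) j)))"
  proof -
  have rn: "r \<le> n" and sn: "s \<le> n" and nk: "n \<le> k" using assms by auto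
  have E1: "completable k rho n r s L \<longleftrightarrow>
           (\<forall>I J. I \<subseteq> {1..r} \<longrightarrow> J \<subseteq> {1..s} \<longrightarrow>
              card I * (n - s) + card J * (n - r) \<le>
              (\<Sum>l\<in>{1..k}. min (rho l - occ r s L l) (mu_rows s L I l + mu_cols r L J l)))"
  proof
    assume "completable k rho n r s L"
    then obtain M where M: "rho_latin_square k rho n M" "\<forall>i\<in>{1..r}. \<forall>j\<in>{1..s}. M i j = L i j"
      unfolding completable_def by blast
    show "\<forall>I J. I \<subseteq> {1..r} \<longrightarrow> J \<subseteq> {1..s} \<longrightarrow>
              card I * (n - s) + card J * (n - r) \<le>
              (\<Sum>l\<in>{1..k}. min (rho l - occ r s L l) (mu_rows s L I l + mu_cols r L J l))"
      using necessity[OF M rn sn] by blast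
  next
    assume c1: "\<forall>I J. I \<subseteq> {1..r} \<longrightarrow> J \<subseteq> {1..s} \<longrightarrow>
              card I * (n - s) + card J * (n - r) \<le>
              (\<Sum>l\<in>{1..k}. min (rho l - occ r s L l) (mu_rows s L I l + mu_cols r L J l))"
    show "completable k rho n r s L"
      by (rule sufficiency[OF nk rn sn assms(5) assms(11) assms(12) c1])
  qed
  have E2: "(\<forall>I J. I \<subseteq> {1..r} \<longrightarrow> J \<subseteq> {1..s} \<longrightarrow>
              card I * (n - s) + card J * (n - r) \<le>
              (\<Sum>l\<in>{1..k}. min (rho l - occ r s L l) (mu_rows s L I l + mu_cols r L J l)))
        \<longleftrightarrow> (\<forall>I J K. I \<subseteq> {1..r} \<longrightarrow> J \<subseteq> {1..s} \<longrightarrow> K \<subseteq> {1..k} \<longrightarrow>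
              (\<Sum>l\<in>K. rho l - occ r s L l) \<ge>
              (\<Sum>i\<in>I. (n - s) - mu_row s L ({1..k} - K) i) +
              (\<Sum>j\<in>J. (n - r) - mu_col r L ({1..k} - K) j))"
    using cond1_imp_cond2[where b="\<lambda>l. rho l - occ r s L l" and r=r and s=s and n=n and k=k and L=L]
          cond2_imp_cond1[where b="\<lambda>l. rho l - occ r s L l" and r=r and s=s and n=n and k=k and L=L] by blast
  show ?thesis using E1 E2 by blast
qed

end
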